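(* Under Assumptions 1–3 (see context), there exist a real $d\times d$ symmetric positive definite matrix $M$ and a constant $\delta_0>0$ such that: (i) if $y$ is a solution of $dy/dt=F(y)$ with $\|y(0)-c\|_M\le\delta_0$, then for all $t\ge0$, $\frac{d}{dt}\|y(t)-c\|_M\le-\rho\|y(t)-c\|_M$; (ii) if $y,z$ are two solutions of $dy/dt=F(y)$ with $\|y(0)-c\|_M\le\delta_0$ and $\|z(0)-c\|_M\le\delta_0$, then for all $t\ge0$, $\frac d{dt}\|y(t)-z(t)\|_M\le-\rho\|y(t)-z(t)\|_M$. Moreover, there exist $K_1,K_2\in\mathbb R$ such that, whenever $N$ is sufficiently large: (iii) for all $X\in S_N$ with $\delta_0\ge G(N^{-1}X)\ge K_1N^{-1/2}$, $\mathcal Q^NG(N^{-1}X)\le-\rho G(N^{-1}X)$; (iv) there is a Markovian coupling $(U^N,V^N)$ of two copies of $X^N$, whose generator $\mathcal A^N$ satisfies $\mathcal A^NH(U,V)\le-\rho H(U,V)$ for all $U,V\in S_N\cap B_M(Nc,N\delta_0)$ with $H(U,V)\ge K_2$.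
   Context: Setting: for each $N$, $X^N$ is a pure jump Markov process on $S_N\subseteq\mathbb Z^d$ with $N^{-1}S_N\subseteq\hat S$, $\hat S\subseteq\mathbb R^d$ closed. Assumption 1: finite $\mathcal J\subset\mathbb Z^d$ and continuously differentiable $r_J:\hat S\to[0,\infty)$, only transitions $X\to X+J$ at rate $Nr_J(N^{-1}X)$. Assumption 2: every vector of $\mathbb Z^d$ is a finite sum of elements of $\mathcal J$. $F(y)=\sum_JJr_J(y)$. Assumption 3: there is $c$ in the interior of $\hat S$ with $F(c)=0$, $r_J(c)>0$ for all $J$, and $\rho>0$ such that all eigenvalues of $A=\sum_JJ\nabla r_J(c)$ have real part $<-\rho$. Notation: $\|x\|_M=(x^TMx)^{1/2}$, $B_M(z,\epsilon)=\{x:\|x-z\|_M\le\epsilon\}$, $H(z,w)=\|z-w\|_M$, $G(z)=H(z,c)$; $\mathcal Q^N$ is the generator of $x^N=N^{-1}X^N$, i.e. $\mathcal Q^Ng(x)=\sum_JNr_J(x)(g(x+J/N)-g(x))$. *)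

theory Defs
  imports "HOL-Analysis.Analysis"
begin

definition ivec :: "int^'d \<Rightarrow> real^'d" where
  "ivec J = (\<chi> i. real_of_int (J $ i))"

definition drift :: "(int^'d) set \<Rightarrow> (int^'d \<Rightarrow> real^'d \<Rightarrow> real) \<Rightarrow> real^'d \<Rightarrow> real^'d" where
  "drift Js r y = (\<Sum>J\<in>Js. r J y *\<^sub>R ivec J)"

text \<open>A = sum_J J (grad r_J(c))^T, entry (i,k) = sum_J J_i d_k r_J(c).\<close>
definition matA :: "(int^'d) set \<Rightarrow> (int^'d \<Rightarrow> real^'d \<Rightarrow> real^'d) \<Rightarrow> real^'d \<Rightarrow> real^'d^'d" where
  "matA Js g c = (\<chi> i k. \<Sum>J\<in>Js. real_of_int (J $ i) * (g J c) $ k)"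

definition complex_eigenvalue :: "real^'d^'d \<Rightarrow> complex \<Rightarrow> bool" where
  "complex_eigenvalue A lam \<longleftrightarrow>
     (\<exists>v::complex^'d. v \<noteq> 0 \<and> (\<chi> i j. complex_of_real (A $ i $ j)) *v v = lam *s v)"

definition sym_pos_def :: "real^'d^'d \<Rightarrow> bool" where
  "sym_pos_def M \<longleftrightarrow> transpose M = M \<and> (\<forall>x. x \<noteq> 0 \<longrightarrow> x \<bullet> (M *v x) > 0)"

definition normM :: "real^'d^'d \<Rightarrow> real^'d \<Rightarrow> real" where
  "normM M x = sqrt (x \<bullet> (M *v x))"

definition genQ :: "(int^'d) set \<Rightarrow> (int^'d \<Rightarrow> real^'d \<Rightarrow> real) \<Rightarrow> nat \<Rightarrow> (real^'d \<Rightarrow> real) \<Rightarrow> real^'d \<Rightarrow> real" where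
  "genQ Js r N f x = (\<Sum>J\<in>Js. real N * r J x * (f (x + (1 / real N) *\<^sub>R ivec J) - f x))"

definition rateX :: "(int^'d) set \<Rightarrow> (int^'d \<Rightarrow> real^'d \<Rightarrow> real) \<Rightarrow> nat \<Rightarrow> int^'d \<Rightarrow> int^'d \<Rightarrow> real" where
  "rateX Js r N X X' = (\<Sum>J\<in>{J\<in>Js. J \<noteq> 0 \<and> X + J = X'}. real N * r J ((1 / real N) *\<^sub>R ivec X))"

text \<open>A Markovian coupling of two copies of X^N on S_N x S_N, given by its
  jump-rate kernel cq (finitely many jumps from each state), whose two
  marginal jump rates coincide with those of X^N.\<close>
definition is_markov_coupling ::
  "(int^'d) set \<Rightarrow> (int^'d \<Rightarrow> real^'d \<Rightarrow> real) \<Rightarrow> nat \<Rightarrow> (int^'d) set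
   \<Rightarrow> ((int^'d) \<times> (int^'d) \<Rightarrow> (int^'d) \<times> (int^'d) \<Rightarrow> real) \<Rightarrow> bool" where
  "is_markov_coupling Js r N SN cq \<longleftrightarrow>
     (\<forall>p q. cq p q \<ge> 0) \<and> (\<forall>p. finite {q. cq p q \<noteq> 0}) \<and>
     (\<forall>U\<in>SN. \<forall>V\<in>SN. \<forall>U'. U' \<noteq> U \<longrightarrow>
        (\<Sum>q\<in>{q. cq (U,V) q \<noteq> 0 \<and> fst q = U'}. cq (U,V) q) = rateX Js r N U U') \<and>
     (\<forall>U\<in>SN. \<forall>V\<in>SN. \<forall>V'. V' \<noteq> V \<longrightarrow>
        (\<Sum>q\<in>{q. cq (U,V) q \<noteq> 0 \<and> snd q = V'}. cq (U,V) q) = rateX Js r N V V')"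

definition genA :: "((int^'d) \<times> (int^'d) \<Rightarrow> (int^'d) \<times> (int^'d) \<Rightarrow> real)
     \<Rightarrow> ((int^'d) \<times> (int^'d) \<Rightarrow> real) \<Rightarrow> (int^'d) \<times> (int^'d) \<Rightarrow> real" where
  "genA cq f p = (\<Sum>q\<in>{q. cq p q \<noteq> 0}. cq p q * (f q - f p))"

end

theory Submission
  imports Defs "Jordan_Normal_Form.Spectral_Radius"
begin

lemma jnf_schur:
  fixes Ac :: "complex mat"
  assumes A: "Ac \<in> carrier_mat n n"
  shows "\<exists>B Q. B \<in> carrier_mat n n \<and> Q \<in> carrier_mat n n \<and> (\<forall>i<n. \<forall>j<i. B$$(i,j) = 0)
     \<and> (\<forall>i<n. eigenvalue Ac (B$$(i,i))) \<and> Q * Ac = B * Q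
     \<and> (\<forall>v\<in>carrier_vec n. Q *\<^sub>v v = 0\<^sub>v n \<longrightarrow> v = 0\<^sub>v n)"
proof -
  obtain es where cp: "char_poly Ac = (\<Prod>a\<leftarrow>es. [:-a,1:])" "length es = n"
    using char_poly_factorized[OF A] by blast
  obtain B P Q where sd: "schur_decomposition Ac es = (B,P,Q)" by (cases "schur_decomposition Ac es", auto)
  from schur_decomposition[OF A cp(1) sd] have sim: "similar_mat_wit Ac B P Q"
    and ut: "upper_triangular B" and dg: "diag_mat B = es" by auto
  note D = similar_mat_witD2[OF A sim]
  have QA: "Q * Ac = B * Q"
  proof -
    have BQ: "B * Q \<in> carrier_mat n n" using D by auto
    have "Q * Ac = Q * (P * (B * Q))" using D(3) D by simp
    also have "\<dots> = (Q * P) * (B * Q)" using assoc_mult_mat[OF D(7) D(6) BQ] by simp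
    also have "\<dots> = B * Q" using D by simp
    finally show ?thesis .
  qed
  have ev: "\<forall>i<n. eigenvalue Ac (B$$(i,i))"
  proof (intro allI impI)
    fix i assume i: "i < n"
    have "es ! i = map (\<lambda>i. B$$(i,i)) [0..<dim_row B] ! i" using dg by (simp add: diag_mat_def)
    also have "\<dots> = B$$(i,i)" using i D(5) by simp
    finally have "B$$(i,i) = es ! i" by simp
    hence "B$$(i,i) \<in> set es" using i cp(2) by simp
    hence "poly (char_poly Ac) (B$$(i,i)) = 0" unfolding cp(1) by (rule linear_poly_root)
    thus "eigenvalue Ac (B$$(i,i))" using eigenvalue_root_char_poly[OF A] by simp
  qed
  have inj: "\<forall>v\<in>carrier_vec n. Q *\<^sub>v v = 0\<^sub>v n \<longrightarrow> v = 0\<^sub>v n"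
  proof (intro ballI impI)
    fix v :: "complex vec" assume v: "v \<in> carrier_vec n" and q: "Q *\<^sub>v v = 0\<^sub>v n"
    have "v = (P * Q) *\<^sub>v v" using D(1) v by simp
    also have "\<dots> = P *\<^sub>v (Q *\<^sub>v v)" by (rule assoc_mult_mat_vec[OF D(6) D(7) v])
    also have "\<dots> = 0\<^sub>v n" using q D(6) by auto
    finally show "v = 0\<^sub>v n" .
  qed
  have ut': "\<forall>i<n. \<forall>j<i. B$$(i,j) = 0" using ut D(5) unfolding upper_triangular_def by auto
  show ?thesis
    apply (rule exI[of _ B], rule exI[of _ Q])
    apply (rule conjI, fact D(5))
    apply (rule conjI, fact D(7))
    apply (rule conjI, fact ut')
    apply (rule conjI, fact ev)
    apply (rule conjI, fact QA)
    apply (fact inj)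
    done
qed

lemma sum_reidx: "bij_betw f {..<n} (UNIV::'d set) \<Longrightarrow> (\<Sum>k\<in>UNIV. \<phi> k) = (\<Sum>k<n. \<phi> (f k))"
  by (simp add: sum.reindex_bij_betw)

lemma transfer_schur:
  fixes A :: "real^'d::finite^'d"
  shows "\<exists>Qf Bf. (\<forall>i<CARD('d). \<forall>x::real^'d. (\<Sum>k\<in>UNIV. Qf i k * complex_of_real ((A *v x)$k))
              = (\<Sum>j<CARD('d). Bf i j * (\<Sum>k\<in>UNIV. Qf j k * complex_of_real (x$k))))
    \<and> (\<forall>i<CARD('d). \<forall>j<i. Bf i j = 0)
    \<and> (\<forall>i<CARD('d). complex_eigenvalue A (Bf i i))
    \<and> (\<forall>x::real^'d. (\<forall>i<CARD('d). (\<Sum>k\<in>UNIV. Qf i k * complex_of_real (x$k)) = 0) \<longrightarrow> x = 0)"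
proof -
  define n where "n = CARD('d)"
  obtain f where f: "bij_betw f {..<n} (UNIV::'d set)"
    using finite_same_card_bij[of "{..<n}" "UNIV::'d set"] unfolding n_def by auto
  define g where "g = inv_into {..<n} f"
  have gl: "g k < n" for k using f unfolding g_def
    by (metis bij_betw_def inv_into_into lessThan_iff UNIV_I)
  have fg: "f (g k) = k" for k using f unfolding g_def by (meson UNIV_I bij_betw_inv_into_right)
  have gf: "i < n \<Longrightarrow> g (f i) = i" for i using f unfolding g_def
    by (meson bij_betw_inv_into_left lessThan_iff)
  define Ac where "Ac = mat n n (\<lambda>(i,j). complex_of_real (A $ f i $ f j))"
  have Ac: "Ac \<in> carrier_mat n n" unfolding Ac_def by simp
  obtain B Q where B: "B \<in> carrier_mat n n" and Q: "Q \<in> carrier_mat n n"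
    and ut: "\<forall>i<n. \<forall>j<i. B$$(i,j) = 0" and ev: "\<forall>i<n. eigenvalue Ac (B$$(i,i))"
    and QA: "Q * Ac = B * Q" and inj: "\<forall>v\<in>carrier_vec n. Q *\<^sub>v v = 0\<^sub>v n \<longrightarrow> v = 0\<^sub>v n"
    using jnf_schur[OF Ac] by blast
  define Qf where "Qf i k = Q $$ (i, g k)" for i k
  define Bf where "Bf i j = B $$ (i, j)" for i j
  define xv where "xv x = vec n (\<lambda>k. complex_of_real ((x::real^'d) $ f k))" for x
  have xv: "xv x \<in> carrier_vec n" for x unfolding xv_def by simp
  have Qxv: "(\<Sum>k\<in>UNIV. Qf i k * complex_of_real (x$k)) = (Q *\<^sub>v xv x) $ i" if i: "i < n" for i x
  proof -
    have "(\<Sum>k\<in>UNIV. Qf i k * complex_of_real (x$k)) = (\<Sum>k<n. Qf i (f k) * complex_of_real (x$ f k))"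
      by (rule sum_reidx[OF f])
    also have "\<dots> = (\<Sum>k<n. Q $$ (i,k) * complex_of_real (x$ f k))"
      unfolding Qf_def by (intro sum.cong refl) (simp add: gf)
    also have "\<dots> = (Q *\<^sub>v xv x) $ i" using i Q
      by (simp add: mult_mat_vec_def scalar_prod_def xv_def lessThan_atLeast0 row_def)
    finally show ?thesis .
  qed
  have Axv: "xv (A *v x) = Ac *\<^sub>v xv x" for x
  proof (rule eq_vecI)
    fix k assume "k < dim_vec (Ac *\<^sub>v xv x)"
    hence k: "k < n" using Ac by simp
    have "(A *v x) $ f k = (\<Sum>l\<in>UNIV. A $ f k $ l * x $ l)" by (simp add: matrix_vector_mult_def)
    also have "\<dots> = (\<Sum>l<n. A $ f k $ f l * x $ f l)" by (rule sum_reidx[OF f])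
    finally have "complex_of_real ((A *v x) $ f k) = (\<Sum>l<n. complex_of_real (A $ f k $ f l) * complex_of_real (x $ f l))"
      by simp
    thus "xv (A *v x) $ k = (Ac *\<^sub>v xv x) $ k" using k Ac
      by (simp add: xv_def Ac_def mult_mat_vec_def scalar_prod_def lessThan_atLeast0 row_def)
  qed (simp add: xv_def Ac_def)
  have P1: "\<forall>i<n. \<forall>x::real^'d. (\<Sum>k\<in>UNIV. Qf i k * complex_of_real ((A *v x)$k))
              = (\<Sum>j<n. Bf i j * (\<Sum>k\<in>UNIV. Qf j k * complex_of_real (x$k)))"
  proof (intro allI impI)
    fix i x assume i: "i < n"
    have "(\<Sum>k\<in>UNIV. Qf i k * complex_of_real ((A *v x)$k)) = (Q *\<^sub>v (Ac *\<^sub>v xv x)) $ i"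
      using Qxv[OF i] Axv by simp
    also have "Q *\<^sub>v (Ac *\<^sub>v xv x) = B *\<^sub>v (Q *\<^sub>v xv x)"
      using assoc_mult_mat_vec[OF Q Ac xv] assoc_mult_mat_vec[OF B Q xv] QA by simp
    also have "(B *\<^sub>v (Q *\<^sub>v xv x)) $ i = (\<Sum>j<n. B $$ (i,j) * (Q *\<^sub>v xv x) $ j)"
      using i B Q by (simp add: mult_mat_vec_def scalar_prod_def lessThan_atLeast0 row_def)
    also have "\<dots> = (\<Sum>j<n. Bf i j * (\<Sum>k\<in>UNIV. Qf j k * complex_of_real (x$k)))"
      unfolding Bf_def by (intro sum.cong refl) (simp add: Qxv)
    finally show "(\<Sum>k\<in>UNIV. Qf i k * complex_of_real ((A *v x)$k))
              = (\<Sum>j<n. Bf i j * (\<Sum>k\<in>UNIV. Qf j k * complex_of_real (x$k)))" .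
  qed
  have P3: "\<forall>i<n. complex_eigenvalue A (Bf i i)"
  proof (intro allI impI)
    fix i assume i: "i < n"
    from ev i obtain v where v: "eigenvector Ac v (B$$(i,i))" unfolding eigenvalue_def by blast
    hence vc: "v \<in> carrier_vec n" and v0: "v \<noteq> 0\<^sub>v n" and Av: "Ac *\<^sub>v v = B$$(i,i) \<cdot>\<^sub>v v"
      using Ac unfolding eigenvector_def by auto
    define vv where "vv = ((\<chi> k. vec_index v (g k)) :: complex^'d)"
    have "vv \<noteq> 0"
    proof
      assume "vv = 0"
      hence "v $ g k = 0" for k unfolding vv_def by (metis vec_lambda_beta zero_index)
      hence "v = 0\<^sub>v n" using vc gf by (intro eq_vecI) (auto, metis)
      with v0 show False by simp
    qed
    moreover have "(\<chi> a b. complex_of_real (A $ a $ b)) *v vv = B$$(i,i) *s vv"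
    proof -
      have "((\<chi> a b. complex_of_real (A $ a $ b)) *v vv) $ k = (B$$(i,i) *s vv) $ k" for k
      proof -
        have "((\<chi> a b. complex_of_real (A $ a $ b)) *v vv) $ k = (\<Sum>l\<in>UNIV. complex_of_real (A $ k $ l) * v $ g l)"
          by (simp add: matrix_vector_mult_def vv_def)
        also have "\<dots> = (\<Sum>l<n. complex_of_real (A $ f (g k) $ f l) * v $ l)"
          by (subst sum_reidx[OF f]) (intro sum.cong refl, simp add: gf fg)
        also have "\<dots> = (Ac *\<^sub>v v) $ g k" using gl[of k] vc
          by (simp add: Ac_def mult_mat_vec_def scalar_prod_def lessThan_atLeast0 row_def)
        also have "\<dots> = B$$(i,i) * v $ g k" using Av gl[of k] vc by simp
        finally show ?thesis by (simp add: vv_def)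
      qed
      thus ?thesis by (simp add: Finite_Cartesian_Product.vec_eq_iff vector_scalar_mult_def)
    qed
    ultimately show "complex_eigenvalue A (Bf i i)" unfolding complex_eigenvalue_def Bf_def by blast
  qed
  have P4: "\<forall>x::real^'d. (\<forall>i<n. (\<Sum>k\<in>UNIV. Qf i k * complex_of_real (x$k)) = 0) \<longrightarrow> x = 0"
  proof (intro allI impI)
    fix x :: "real^'d" assume h: "\<forall>i<n. (\<Sum>k\<in>UNIV. Qf i k * complex_of_real (x$k)) = 0"
    have "Q *\<^sub>v xv x = 0\<^sub>v n" using h Qxv Q by (intro eq_vecI) auto
    hence "xv x = 0\<^sub>v n" using inj xv by blast
    hence "x $ f k = 0" if "k < n" for k using that
      by (metis (no_types, lifting) index_vec index_zero_vec(1) of_real_eq_0_iff xv_def)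
    hence "x $ k = 0" for k using gl fg by metis
    thus "x = 0" by (simp add: Finite_Cartesian_Product.vec_eq_iff)
  qed
  have P2: "\<forall>i<n. \<forall>j<i. Bf i j = 0" using ut unfolding Bf_def by blast
  show ?thesis
    apply (rule exI[of _ Qf], rule exI[of _ Bf])
    unfolding n_def[symmetric]
    apply (rule conjI)
     apply (fact P1)
    apply (rule conjI)
     apply (fact P2)
    apply (rule conjI)
     apply (fact P3)
    apply (fact P4)
    done
qed

lemma inner_M_repr:
  fixes C :: "nat \<Rightarrow> 'd::finite \<Rightarrow> complex" and x y :: "real^'d" and n :: nat
  defines "M \<equiv> (\<chi> k l. Re (\<Sum>i<n. cnj (C i k) * C i l)) :: real^'d^'d"
  shows "x \<bullet> (M *v y) = Re (\<Sum>i<n. cnj (\<Sum>k\<in>UNIV. C i k * of_real (x$k)) * (\<Sum>l\<in>UNIV. C i l * of_real (y$l)))"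
proof -
  have "x \<bullet> (M *v y) = (\<Sum>k\<in>UNIV. x$k * (\<Sum>l\<in>UNIV. Re (\<Sum>i<n. cnj (C i k) * C i l) * y$l))"
    by (simp add: inner_vec_def matrix_vector_mult_def M_def)
  also have "\<dots> = (\<Sum>k\<in>UNIV. \<Sum>l\<in>UNIV. \<Sum>i<n. Re (cnj (C i k * of_real (x$k)) * (C i l * of_real (y$l))))"
    by (simp add: sum_distrib_left sum_distrib_right Re_sum mult_ac distrib_left sum.distrib)
  also have "\<dots> = (\<Sum>k\<in>UNIV. \<Sum>i<n. \<Sum>l\<in>UNIV. Re (cnj (C i k * of_real (x$k)) * (C i l * of_real (y$l))))"
    by (intro sum.cong refl) (rule sum.swap)
  also have "\<dots> = (\<Sum>i<n. \<Sum>k\<in>UNIV. \<Sum>l\<in>UNIV. Re (cnj (C i k * of_real (x$k)) * (C i l * of_real (y$l))))"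
    by (rule sum.swap)
  also have "\<dots> = Re (\<Sum>i<n. cnj (\<Sum>k\<in>UNIV. C i k * of_real (x$k)) * (\<Sum>l\<in>UNIV. C i l * of_real (y$l)))"
    by (simp add: Re_sum cnj_sum sum_product)
  finally show ?thesis .
qed

lemma lyap_abstract:
  fixes A :: "real^'d::finite^'d" and C :: "nat \<Rightarrow> 'd \<Rightarrow> complex" and T :: "nat \<Rightarrow> nat \<Rightarrow> complex"
    and n :: nat
  assumes h1: "\<forall>i<n. \<forall>x::real^'d. (\<Sum>k\<in>UNIV. C i k * of_real ((A *v x)$k)) = (\<Sum>j<n. T i j * (\<Sum>k\<in>UNIV. C j k * of_real (x$k)))"
  and h2: "\<forall>i<n. Re (T i i) \<le> -a"
  and h3: "\<forall>i<n. \<forall>j<n. i \<noteq> j \<longrightarrow> cmod (T i j) \<le> e"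
  and h4: "\<forall>x::real^'d. (\<forall>i<n. (\<Sum>k\<in>UNIV. C i k * of_real (x$k)) = 0) \<longrightarrow> x = 0"
  and e: "e \<ge> 0"
  defines "M \<equiv> (\<chi> k l. Re (\<Sum>i<n. cnj (C i k) * C i l)) :: real^'d^'d"
  shows "sym_pos_def M \<and> (\<forall>x. x \<bullet> (M *v (A *v x)) \<le> (-a + e * n) * (x \<bullet> (M *v x)))"
proof -
  define w where "w x i = (\<Sum>k\<in>UNIV. C i k * of_real ((x::real^'d)$k))" for x i
  have rep: "x \<bullet> (M *v y) = Re (\<Sum>i<n. cnj (w x i) * w y i)" for x y
    unfolding M_def w_def by (rule inner_M_repr)
  have q: "x \<bullet> (M *v x) = (\<Sum>i<n. (cmod (w x i))^2)" for x
  proof -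
    have "Re (cnj (w x i) * w x i) = (cmod (w x i))^2" for i
      by (simp add: complex_mult_cnj cmod_def power2_eq_square)
    thus ?thesis unfolding rep by (simp add: Re_sum)
  qed
  have sym: "transpose M = M"
  proof -
    have "Re (\<Sum>i<n. cnj (C i l) * C i k) = Re (\<Sum>i<n. cnj (C i k) * C i l)" for k l
    proof -
      have "Re (\<Sum>i<n. cnj (C i l) * C i k) = Re (cnj (\<Sum>i<n. cnj (C i k) * C i l))"
        by (simp add: cnj_sum mult.commute)
      thus ?thesis by simp
    qed
    thus ?thesis unfolding M_def transpose_def by (simp add: Finite_Cartesian_Product.vec_eq_iff)
  qed
  have pos: "x \<bullet> (M *v x) > 0" if "x \<noteq> 0" for x
  proof -
    have ge: "x \<bullet> (M *v x) \<ge> 0" unfolding q by (simp add: sum_nonneg)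
    moreover have "x \<bullet> (M *v x) \<noteq> 0"
    proof
      assume "x \<bullet> (M *v x) = 0"
      hence "\<forall>i\<in>{..<n}. (cmod (w x i))^2 = 0" unfolding q by (subst sum_nonneg_eq_0_iff[symmetric]) auto
      hence "\<forall>i<n. w x i = 0" by simp
      hence "x = 0" using h4 unfolding w_def by blast
      with that show False by simp
    qed
    ultimately show ?thesis by simp
  qed
  have bound: "x \<bullet> (M *v (A *v x)) \<le> (-a + e * n) * (x \<bullet> (M *v x))" for x
  proof -
    define S where "S = (\<Sum>i<n. (cmod (w x i))^2)"
    have wA: "w (A *v x) i = (\<Sum>j<n. T i j * w x j)" if "i < n" for i
      using h1 that unfolding w_def by blast
    have tm: "Re (cnj (w x i) * (T i j * w x j)) \<le> (if i = j then -a * (cmod (w x i))^2 else 0)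
        + e * ((cmod (w x i))^2 + (cmod (w x j))^2) / 2" if i: "i < n" and j: "j < n" for i j
    proof (cases "i = j")
      case True
      have "cnj (w x i) * (T i i * w x i) = T i i * (cnj (w x i) * w x i)" by (simp add: mult_ac)
      also have "cnj (w x i) * w x i = of_real ((cmod (w x i))^2)" by (metis complex_norm_square mult.commute)
      finally have "cnj (w x i) * (T i i * w x i) = T i i * of_real ((cmod (w x i))^2)" .
      hence "Re (cnj (w x i) * (T i j * w x j)) = Re (T i i * of_real ((cmod (w x i))^2))" using True by (simp only:)
      also have "\<dots> = Re (T i i) * (cmod (w x i))^2" by (simp only: times_complex.sel Re_complex_of_real Im_complex_of_real mult_zero_right diff_zero)
      also have "\<dots> \<le> -a * (cmod (w x i))^2" using h2 i by (intro mult_right_mono) auto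
      finally have R: "Re (cnj (w x i) * (T i j * w x j)) \<le> -a * (cmod (w x i))^2" .
      have nn: "0 \<le> e * ((cmod (w x i))^2 + (cmod (w x j))^2) / 2" using e by simp
      have ifeq: "(if i = j then -a * (cmod (w x i))^2 else 0) = -a * (cmod (w x i))^2" using True by simp
      show ?thesis unfolding ifeq using R nn by linarith
    next
      case False
      have "Re (cnj (w x i) * (T i j * w x j)) \<le> cmod (cnj (w x i) * (T i j * w x j))" by (rule complex_Re_le_cmod)
      also have "\<dots> = cmod (T i j) * (cmod (w x i) * cmod (w x j))" by (simp add: norm_mult)
      also have "\<dots> \<le> e * (cmod (w x i) * cmod (w x j))" using h3 i j False by (intro mult_right_mono) auto
      also have "\<dots> \<le> e * ((cmod (w x i))^2 + (cmod (w x j))^2) / 2"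
      proof -
        have "0 \<le> (cmod (w x i) - cmod (w x j))^2" by simp
        hence X: "2 * (cmod (w x i) * cmod (w x j)) \<le> (cmod (w x i))^2 + (cmod (w x j))^2"
          unfolding power2_diff by (simp add: algebra_simps)
        show ?thesis using mult_left_mono[OF X e] by (simp add: algebra_simps)
      qed
      finally show ?thesis using False by simp
    qed
    have "x \<bullet> (M *v (A *v x)) = (\<Sum>i<n. \<Sum>j<n. Re (cnj (w x i) * (T i j * w x j)))"
      unfolding rep by (simp add: wA Re_sum sum_distrib_left)
    also have "\<dots> \<le> (\<Sum>i<n. \<Sum>j<n. (if i = j then -a * (cmod (w x i))^2 else 0)
        + e * ((cmod (w x i))^2 + (cmod (w x j))^2) / 2)"
      by (intro sum_mono tm) auto
    also have "\<dots> = -a * S + e * n * S"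
    proof -
      have "(\<Sum>i<n. \<Sum>j<n. e * ((cmod (w x i))^2 + (cmod (w x j))^2) / 2)
          = e / 2 * (\<Sum>i<n. \<Sum>j<n. (cmod (w x i))^2) + e / 2 * (\<Sum>i<n. \<Sum>j<n. (cmod (w x j))^2)"
        by (simp add: sum.distrib sum_distrib_left add_divide_distrib distrib_left mult_ac)
      also have "\<dots> = e * n * S" unfolding S_def by (simp add: sum_distrib_left[symmetric] field_simps)
      finally have 1: "(\<Sum>i<n. \<Sum>j<n. e * ((cmod (w x i))^2 + (cmod (w x j))^2) / 2) = e * n * S" .
      have 2: "(\<Sum>i<n. \<Sum>j<n. (if i = j then -a * (cmod (w x i))^2 else 0)) = -a * S"
        unfolding S_def by (simp add: sum_distrib_left)
      show ?thesis using 1 2 by (simp only: sum.distrib 1 2)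
    qed
    also have "\<dots> = (-a + e * n) * (x \<bullet> (M *v x))" unfolding q S_def by (simp add: algebra_simps)
    finally show ?thesis .
  qed
  show ?thesis unfolding sym_pos_def_def using sym pos bound by blast
qed

lemma lyapunov:
  fixes A :: "real^'d::finite^'d" and \<rho> :: real
  assumes eig: "\<forall>lam. complex_eigenvalue A lam \<longrightarrow> Re lam < - \<rho>"
  shows "\<exists>M \<rho>1. sym_pos_def M \<and> \<rho>1 > \<rho> \<and> (\<forall>x. x \<bullet> (M *v (A *v x)) \<le> - \<rho>1 * (x \<bullet> (M *v x)))"
proof -
  define n where "n = CARD('d)"
  have n0: "n > 0" unfolding n_def by simp
  obtain Qf Bf where
    P1: "\<forall>i<n. \<forall>x::real^'d. (\<Sum>k\<in>UNIV. Qf i k * complex_of_real ((A *v x)$k))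
              = (\<Sum>j<n. Bf i j * (\<Sum>k\<in>UNIV. Qf j k * complex_of_real (x$k)))"
    and P2: "\<forall>i<n. \<forall>j<i. Bf i j = 0"
    and P3: "\<forall>i<n. complex_eigenvalue A (Bf i i)"
    and P4: "\<forall>x::real^'d. (\<forall>i<n. (\<Sum>k\<in>UNIV. Qf i k * complex_of_real (x$k)) = 0) \<longrightarrow> x = 0"
    using transfer_schur[of A] unfolding n_def by blast
  define \<eta> where "\<eta> = Min ((\<lambda>i. - \<rho> - Re (Bf i i)) ` {..<n})"
  have \<eta>le: "\<eta> \<le> - \<rho> - Re (Bf i i)" if "i < n" for i unfolding \<eta>_def using that by (intro Min_le) auto
  have \<eta>pos: "\<eta> > 0" unfolding \<eta>_def using n0 P3 eig by (subst Min_gr_iff) auto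
  define K where "K = 1 + (\<Sum>i<n. \<Sum>j<n. cmod (Bf i j))"
  have Kge: "cmod (Bf i j) \<le> K" if "i < n" "j < n" for i j
  proof -
    have "cmod (Bf i j) \<le> (\<Sum>j<n. cmod (Bf i j))" using that by (intro member_le_sum) auto
    also have "\<dots> \<le> (\<Sum>i<n. \<Sum>j<n. cmod (Bf i j))" using that
      by (intro member_le_sum[of i "{..<n}" "\<lambda>i. \<Sum>j<n. cmod (Bf i j)"]) (auto intro: sum_nonneg)
    finally show ?thesis unfolding K_def by simp
  qed
  have Kpos: "K > 0" unfolding K_def by (smt (verit) sum_nonneg norm_ge_zero)
  define \<epsilon> where "\<epsilon> = min 1 (\<eta> / (2 * real n * K))"
  have \<epsilon>pos: "\<epsilon> > 0" unfolding \<epsilon>_def using \<eta>pos n0 Kpos by simp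
  have \<epsilon>1: "\<epsilon> \<le> 1" unfolding \<epsilon>_def by simp
  have \<epsilon>K: "K * \<epsilon> * real n \<le> \<eta> / 2"
  proof -
    have "\<epsilon> \<le> \<eta> / (2 * real n * K)" unfolding \<epsilon>_def by simp
    hence "K * \<epsilon> * real n \<le> K * (\<eta> / (2 * real n * K)) * real n" using Kpos n0
      by (intro mult_right_mono mult_left_mono) auto
    also have "\<dots> = \<eta> / 2" using Kpos n0 by (simp add: field_simps)
    finally show ?thesis .
  qed
  define E where "E i = complex_of_real (\<epsilon> ^ i)" for i :: nat
  have E0: "E i \<noteq> 0" for i unfolding E_def using \<epsilon>pos by simp
  define C where "C i k = Qf i k / E i" for i k
  define T where "T i j = Bf i j * E j / E i" for i j
  define W where "W x j = (\<Sum>k\<in>UNIV. Qf j k * complex_of_real ((x::real^'d)$k))" for x j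
  have CW: "(\<Sum>k\<in>UNIV. C i k * complex_of_real (x$k)) = W x i / E i" for i x
    unfolding C_def W_def by (simp add: sum_divide_distrib)
  have h1: "\<forall>i<n. \<forall>x::real^'d. (\<Sum>k\<in>UNIV. C i k * of_real ((A *v x)$k)) = (\<Sum>j<n. T i j * (\<Sum>k\<in>UNIV. C j k * of_real (x$k)))"
  proof (intro allI impI)
    fix i x assume i: "i < n"
    have "(\<Sum>k\<in>UNIV. C i k * of_real ((A *v x)$k)) = W (A *v x) i / E i" by (rule CW)
    also have "\<dots> = (\<Sum>j<n. Bf i j * W x j) / E i" using P1 i unfolding W_def by simp
    also have "\<dots> = (\<Sum>j<n. T i j * (W x j / E j))" unfolding T_def
      by (simp add: sum_divide_distrib E0)
    also have "\<dots> = (\<Sum>j<n. T i j * (\<Sum>k\<in>UNIV. C j k * of_real (x$k)))" by (simp add: CW)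
    finally show "(\<Sum>k\<in>UNIV. C i k * of_real ((A *v x)$k)) = (\<Sum>j<n. T i j * (\<Sum>k\<in>UNIV. C j k * of_real (x$k)))" .
  qed
  define a where "a = \<rho> + \<eta>"
  have h2: "\<forall>i<n. Re (T i i) \<le> -a"
  proof (intro allI impI)
    fix i assume i: "i < n"
    have "T i i = Bf i i" unfolding T_def using E0 by simp
    thus "Re (T i i) \<le> -a" using \<eta>le[OF i] unfolding a_def by simp
  qed
  define e where "e = K * \<epsilon>"
  have h3: "\<forall>i<n. \<forall>j<n. i \<noteq> j \<longrightarrow> cmod (T i j) \<le> e"
  proof (intro allI impI)
    fix i j assume i: "i < n" and j: "j < n" and ij: "i \<noteq> j"
    show "cmod (T i j) \<le> e"
    proof (cases "j < i")
      case True
      hence "T i j = 0" using P2 i unfolding T_def by simp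
      thus ?thesis unfolding e_def using Kpos \<epsilon>pos by simp
    next
      case False
      hence ji: "i < j" using ij by simp
      have "cmod (T i j) = cmod (Bf i j) * (\<epsilon> ^ j / \<epsilon> ^ i)" unfolding T_def E_def
        using \<epsilon>pos by (simp add: norm_mult norm_divide norm_power)
      also have "\<epsilon> ^ j / \<epsilon> ^ i = \<epsilon> ^ (j - i)" using \<epsilon>pos ji by (simp add: power_diff)
      also have "\<epsilon> ^ (j - i) \<le> \<epsilon> ^ 1" using \<epsilon>pos \<epsilon>1 ji by (intro power_decreasing) auto
      hence "cmod (Bf i j) * \<epsilon> ^ (j - i) \<le> K * \<epsilon>" using Kge[OF i j] \<epsilon>pos Kpos
        by (intro mult_mono) auto
      finally show ?thesis unfolding e_def .
    qed
  qed
  have h4: "\<forall>x::real^'d. (\<forall>i<n. (\<Sum>k\<in>UNIV. C i k * of_real (x$k)) = 0) \<longrightarrow> x = 0"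
  proof (intro allI impI)
    fix x :: "real^'d" assume h: "\<forall>i<n. (\<Sum>k\<in>UNIV. C i k * of_real (x$k)) = 0"
    have "\<forall>i<n. W x i = 0" using h E0 by (simp add: CW)
    thus "x = 0" using P4 unfolding W_def by blast
  qed
  have e0: "e \<ge> 0" unfolding e_def using Kpos \<epsilon>pos by simp
  define M where "M = ((\<chi> k l. Re (\<Sum>i<n. cnj (C i k) * C i l)) :: real^'d^'d)"
  have LA: "sym_pos_def M \<and> (\<forall>x. x \<bullet> (M *v (A *v x)) \<le> (-a + e * n) * (x \<bullet> (M *v x)))"
    unfolding M_def by (rule lyap_abstract[OF h1 h2 h3 h4 e0])
  have "x \<bullet> (M *v (A *v x)) \<le> - (\<rho> + \<eta>/2) * (x \<bullet> (M *v x))" for x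
  proof -
    have q0: "x \<bullet> (M *v x) \<ge> 0" using LA unfolding sym_pos_def_def
      by (cases "x = 0") (auto intro: less_imp_le)
    have "-a + e * n \<le> - (\<rho> + \<eta>/2)" using \<epsilon>K unfolding a_def e_def by simp
    hence "(-a + e * n) * (x \<bullet> (M *v x)) \<le> - (\<rho> + \<eta>/2) * (x \<bullet> (M *v x))" using q0
      by (intro mult_right_mono) auto
    thus ?thesis using LA by (meson order_trans)
  qed
  thus ?thesis using LA \<eta>pos by (intro exI[of _ M] exI[of _ "\<rho> + \<eta>/2"]) auto
qed

lemma M_sym_entry:
  fixes M :: "real^'d::finite^'d"
  assumes h: "transpose M = M" shows "M $ i $ j = M $ j $ i"
proof -
  have "(transpose M) $ i $ j = M $ j $ i" by (simp add: transpose_def)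
  thus ?thesis using h by simp
qed

lemma M_sym_inner:
  fixes M :: "real^'d::finite^'d"
  assumes "transpose M = M"
  shows "x \<bullet> (M *v y) = y \<bullet> (M *v x)"
proof -
  have "x \<bullet> (M *v y) = (\<Sum>i\<in>UNIV. \<Sum>j\<in>UNIV. x$i * M$i$j * y$j)"
    by (simp add: inner_vec_def matrix_vector_mult_def sum_distrib_left mult_ac)
  also have "\<dots> = (\<Sum>j\<in>UNIV. \<Sum>i\<in>UNIV. x$i * M$i$j * y$j)" by (rule sum.swap)
  also have "\<dots> = y \<bullet> (M *v x)"
    by (simp add: inner_vec_def matrix_vector_mult_def sum_distrib_left mult_ac M_sym_entry[OF assms, of _ j for j])
  finally show ?thesis .
qed

lemma M_bilin_add: "(x + y) \<bullet> (M *v (x + y)) = x \<bullet> (M *v x) + x \<bullet> (M *v y) + y \<bullet> (M *v x) + y \<bullet> (M *v y)"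
  by (simp add: matrix_vector_right_distrib inner_add_left inner_add_right)

lemma M_quad_add:
  fixes M :: "real^'d::finite^'d"
  assumes "transpose M = M"
  shows "(x + y) \<bullet> (M *v (x + y)) = x \<bullet> (M *v x) + 2 * (x \<bullet> (M *v y)) + y \<bullet> (M *v y)"
  using M_bilin_add[of x y M] M_sym_inner[OF assms, of y x] by simp

lemma M_quad_scale: "(c *\<^sub>R x) \<bullet> (M *v (c *\<^sub>R x)) = c^2 * (x \<bullet> (M *v x))"
  for M :: "real^'d::finite^'d"
  by (simp add: matrix_vector_mult_scaleR power2_eq_square)

lemma M_bound:
  fixes M :: "real^'d::finite^'d"
  shows "\<bar>x \<bullet> (M *v y)\<bar> \<le> onorm ((*v) M) * norm x * norm y"
proof -
  have "\<bar>x \<bullet> (M *v y)\<bar> \<le> norm x * norm (M *v y)" by (rule Cauchy_Schwarz_ineq2)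
  also have "\<dots> \<le> norm x * (onorm ((*v) M) * norm y)"
    by (intro mult_left_mono onorm) auto
  finally show ?thesis by (simp add: mult_ac)
qed

lemma M_lower:
  fixes M :: "real^'d::finite^'d"
  assumes "sym_pos_def M"
  shows "\<exists>m>0. \<forall>x. m * (norm x)^2 \<le> x \<bullet> (M *v x)"
proof -
  have cont: "continuous_on (sphere 0 1) (\<lambda>x::real^'d. x \<bullet> (M *v x))"
    by (intro continuous_intros)
  have ne: "sphere (0::real^'d) 1 \<noteq> {}"
  proof -
    have "axis undefined (1::real) \<in> sphere (0::real^'d) 1" by simp
    thus ?thesis by blast
  qed
  obtain x0 where x0: "x0 \<in> sphere 0 1" and mn: "\<forall>y\<in>sphere 0 1. x0 \<bullet> (M *v x0) \<le> y \<bullet> (M *v y)"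
    using continuous_attains_inf[OF compact_sphere ne cont] by blast
  have x00: "x0 \<noteq> 0" using x0 by auto
  define m where "m = x0 \<bullet> (M *v x0)"
  have m: "m > 0" using assms x00 unfolding sym_pos_def_def m_def by blast
  have "m * (norm x)^2 \<le> x \<bullet> (M *v x)" for x
  proof (cases "x = 0")
    case True thus ?thesis by simp
  next
    case False
    have "(inverse (norm x) *\<^sub>R x) \<in> sphere 0 1" using False by (simp add: norm_scaleR)
    hence "m \<le> (inverse (norm x) *\<^sub>R x) \<bullet> (M *v (inverse (norm x) *\<^sub>R x))" using mn unfolding m_def by blast
    also have "\<dots> = (inverse (norm x))^2 * (x \<bullet> (M *v x))" by (rule M_quad_scale)
    finally have "m \<le> (inverse (norm x))^2 * (x \<bullet> (M *v x))" .
    hence "m * (norm x)^2 \<le> (inverse (norm x))^2 * (x \<bullet> (M *v x)) * (norm x)^2"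
      by (intro mult_right_mono) auto
    also have "\<dots> = x \<bullet> (M *v x)" using False by (simp add: field_simps power2_eq_square)
    finally show ?thesis .
  qed
  thus ?thesis using m by blast
qed

lemma M_nonneg:
  fixes M :: "real^'d::finite^'d"
  assumes "sym_pos_def M"
  shows "x \<bullet> (M *v x) \<ge> 0"
  using assms unfolding sym_pos_def_def by (cases "x = 0") (auto intro: less_imp_le)

lemma normM_sq:
  assumes "sym_pos_def M"
  shows "(normM M x)^2 = x \<bullet> (M *v x)"
  using M_nonneg[OF assms] unfolding normM_def by simp

lemma normM_scale:
  fixes M :: "real^'d::finite^'d"
  shows "normM M (c *\<^sub>R x) = \<bar>c\<bar> * normM M x"
  unfolding normM_def M_quad_scale by (simp add: real_sqrt_mult)

locale setting =
  fixes Js :: "(int^'d::finite) set" and r :: "int^'d \<Rightarrow> real^'d \<Rightarrow> real"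
    and g :: "int^'d \<Rightarrow> real^'d \<Rightarrow> real^'d" and Shat :: "(real^'d) set" and c :: "real^'d"
  assumes fin: "finite Js"
    and deriv: "\<forall>J\<in>Js. \<forall>x\<in>Shat. (r J has_derivative (\<lambda>v. g J x \<bullet> v)) (at x within Shat)"
    and gcont: "\<forall>J\<in>Js. continuous_on Shat (g J)"
    and cint: "c \<in> interior Shat"
begin

lemma drift_fun: "drift Js r = (\<lambda>y. \<Sum>J\<in>Js. r J y *\<^sub>R ivec J)"
  by (rule ext) (simp add: drift_def)

lemma drift_deriv:
  assumes "x \<in> Shat"
  shows "(drift Js r has_derivative (\<lambda>v. \<Sum>J\<in>Js. (g J x \<bullet> v) *\<^sub>R ivec J)) (at x within Shat)"
  unfolding drift_fun
  by (intro has_derivative_sum has_derivative_scaleR_left) (use deriv assms in blast)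

lemma matA_apply: "matA Js g c *v v = (\<Sum>J\<in>Js. (g J c \<bullet> v) *\<^sub>R ivec J)"
proof -
  have "(matA Js g c *v v) $ i = (\<Sum>J\<in>Js. (g J c \<bullet> v) *\<^sub>R ivec J) $ i" for i
  proof -
    have "(matA Js g c *v v) $ i = (\<Sum>k\<in>UNIV. (\<Sum>J\<in>Js. real_of_int (J $ i) * g J c $ k) * v $ k)"
      by (simp add: matA_def matrix_vector_mult_def)
    also have "\<dots> = (\<Sum>k\<in>UNIV. \<Sum>J\<in>Js. real_of_int (J $ i) * (g J c $ k * v $ k))"
      by (simp add: sum_distrib_right sum_distrib_left mult_ac)
    also have "\<dots> = (\<Sum>J\<in>Js. \<Sum>k\<in>UNIV. real_of_int (J $ i) * (g J c $ k * v $ k))" by (rule sum.swap)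
    also have "\<dots> = (\<Sum>J\<in>Js. (g J c \<bullet> v) *\<^sub>R ivec J) $ i"
      by (simp add: sum_component inner_vec_def ivec_def sum_distrib_left mult_ac)
    finally show ?thesis .
  qed
  thus ?thesis by (simp add: Finite_Cartesian_Product.vec_eq_iff)
qed

lemma key_est:
  fixes M :: "real^'d^'d"
  assumes M: "sym_pos_def M"
    and lyap: "\<forall>x. x \<bullet> (M *v (matA Js g c *v x)) \<le> - \<rho>1 * (x \<bullet> (M *v x))"
    and r12: "\<rho>2 < \<rho>1"
  shows "\<exists>e0>0. cball c e0 \<subseteq> Shat \<and>
    (\<exists>L. \<forall>x\<in>cball c e0. \<forall>y\<in>cball c e0.
        (x - y) \<bullet> (M *v (drift Js r x - drift Js r y)) \<le> - \<rho>2 * ((x - y) \<bullet> (M *v (x - y)))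
      \<and> norm (drift Js r x - drift Js r y) \<le> L * norm (x - y)) \<and>
    (\<exists>Lr. \<forall>J\<in>Js. \<forall>x\<in>cball c e0. \<forall>y\<in>cball c e0. \<bar>r J x - r J y\<bar> \<le> Lr * norm (x - y))"
proof -
  let ?A = "matA Js g c"
  let ?F = "drift Js r"
  obtain m where m: "m > 0" "\<forall>x. m * (norm x)^2 \<le> x \<bullet> (M *v x)" using M_lower[OF M] by blast
  define \<Lambda> where "\<Lambda> = onorm ((*v) M) + 1"
  have \<Lambda>: "\<Lambda> > 0" unfolding \<Lambda>_def using onorm_pos_le[of "(*v) M"] by simp
  have Mb: "\<bar>x \<bullet> (M *v y)\<bar> \<le> \<Lambda> * norm x * norm y" for x y
  proof -
    have "\<bar>x \<bullet> (M *v y)\<bar> \<le> onorm ((*v) M) * norm x * norm y" by (rule M_bound)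
    also have "\<dots> \<le> \<Lambda> * norm x * norm y" unfolding \<Lambda>_def
      by (intro mult_right_mono) (auto simp: algebra_simps)
    finally show ?thesis .
  qed
  define SJ where "SJ = 1 + (\<Sum>J\<in>Js. norm (ivec J))"
  have SJ: "SJ > 0" unfolding SJ_def by (smt (verit) sum_nonneg norm_ge_zero)
  define \<epsilon> where "\<epsilon> = (\<rho>1 - \<rho>2) * m / (\<Lambda> * SJ)"
  have \<epsilon>: "\<epsilon> > 0" unfolding \<epsilon>_def using r12 m \<Lambda> SJ by simp
  obtain e1 where e1: "e1 > 0" "cball c e1 \<subseteq> Shat" using cint mem_interior_cball by blast
  have "\<forall>J\<in>Js. \<exists>d>0. \<forall>z. dist z c < d \<longrightarrow> dist (g J z) (g J c) < \<epsilon>"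
  proof
    fix J assume J: "J \<in> Js"
    have "continuous (at c) (g J)" using continuous_on_interior gcont J cint by blast
    thus "\<exists>d>0. \<forall>z. dist z c < d \<longrightarrow> dist (g J z) (g J c) < \<epsilon>"
      unfolding continuous_at_eps_delta using \<epsilon> by blast
  qed
  then obtain dJ where dJ: "\<forall>J\<in>Js. dJ J > 0 \<and> (\<forall>z. dist z c < dJ J \<longrightarrow> dist (g J z) (g J c) < \<epsilon>)"
    by metis
  define e0 where "e0 = min (e1 / 2) (Min (insert 1 (dJ ` Js)) / 2)"
  have Minpos: "Min (insert 1 (dJ ` Js)) > 0" using fin dJ by (subst Min_gr_iff) auto
  have e0: "e0 > 0" unfolding e0_def using e1 Minpos by simp
  have "cball c e0 \<subseteq> cball c e1" by (rule subset_cball) (use e1 in \<open>simp add: e0_def\<close>)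
  hence e0sub: "cball c e0 \<subseteq> Shat" using e1 by blast
  have gclose: "norm (g J z - g J c) \<le> \<epsilon>" if J: "J \<in> Js" and z: "z \<in> cball c e0" for J z
  proof -
    have "Min (insert 1 (dJ ` Js)) \<le> dJ J" using fin J by (intro Min_le) auto
    hence "dist z c < dJ J" using z Minpos unfolding e0_def by (auto simp: dist_commute)
    thus ?thesis using dJ J by (auto simp: dist_norm intro: less_imp_le)
  qed
  have convex: "convex (cball c e0)" by simp
  define \<Phi> where "\<Phi> z = ?F z - ?A *v z" for z
  have \<Phi>d: "(\<Phi> has_derivative (\<lambda>v. \<Sum>J\<in>Js. ((g J z - g J c) \<bullet> v) *\<^sub>R ivec J)) (at z within cball c e0)"
    if z: "z \<in> cball c e0" for z
  proof -
    have d1: "(?F has_derivative (\<lambda>v. \<Sum>J\<in>Js. (g J z \<bullet> v) *\<^sub>R ivec J)) (at z within cball c e0)"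
      using has_derivative_subset[OF drift_deriv e0sub] e0sub z by blast
    have d2: "((\<lambda>z. ?A *v z) has_derivative (\<lambda>v. ?A *v v)) (at z within cball c e0)"
      by (rule bounded_linear_imp_has_derivative) simp
    have "(\<Phi> has_derivative (\<lambda>v. (\<Sum>J\<in>Js. (g J z \<bullet> v) *\<^sub>R ivec J) - ?A *v v)) (at z within cball c e0)"
      unfolding \<Phi>_def by (rule has_derivative_diff[OF d1 d2])
    moreover have "(\<lambda>v. (\<Sum>J\<in>Js. (g J z \<bullet> v) *\<^sub>R ivec J) - ?A *v v) = (\<lambda>v. \<Sum>J\<in>Js. ((g J z - g J c) \<bullet> v) *\<^sub>R ivec J)"
      by (rule ext) (simp add: matA_apply inner_diff_left scaleR_diff_left sum_subtractf)
    ultimately show ?thesis by simp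
  qed
  have \<Phi>on: "onorm (\<lambda>v. \<Sum>J\<in>Js. ((g J z - g J c) \<bullet> v) *\<^sub>R ivec J) \<le> \<epsilon> * SJ" if z: "z \<in> cball c e0" for z
  proof (rule onorm_le)
    fix v
    have "norm (\<Sum>J\<in>Js. ((g J z - g J c) \<bullet> v) *\<^sub>R ivec J) \<le> (\<Sum>J\<in>Js. norm (((g J z - g J c) \<bullet> v) *\<^sub>R ivec J))"
      by (rule norm_sum)
    also have "\<dots> \<le> (\<Sum>J\<in>Js. \<epsilon> * norm v * norm (ivec J))"
    proof (rule sum_mono)
      fix J assume J: "J \<in> Js"
      have "norm (((g J z - g J c) \<bullet> v) *\<^sub>R ivec J) = \<bar>(g J z - g J c) \<bullet> v\<bar> * norm (ivec J)" by simp
      also have "\<dots> \<le> (norm (g J z - g J c) * norm v) * norm (ivec J)"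
        by (intro mult_right_mono Cauchy_Schwarz_ineq2) auto
      also have "\<dots> \<le> (\<epsilon> * norm v) * norm (ivec J)"
        using gclose[OF J z] by (intro mult_right_mono) auto
      finally show "norm (((g J z - g J c) \<bullet> v) *\<^sub>R ivec J) \<le> \<epsilon> * norm v * norm (ivec J)" .
    qed
    also have "\<dots> = \<epsilon> * norm v * (\<Sum>J\<in>Js. norm (ivec J))" by (simp add: sum_distrib_left)
    also have "\<dots> \<le> \<epsilon> * SJ * norm v" unfolding SJ_def using \<epsilon>
      by (simp add: algebra_simps)
    finally show "norm (\<Sum>J\<in>Js. ((g J z - g J c) \<bullet> v) *\<^sub>R ivec J) \<le> \<epsilon> * SJ * norm v" .
  qed
  have \<Phi>lip: "norm (\<Phi> x - \<Phi> y) \<le> \<epsilon> * SJ * norm (x - y)" if "x \<in> cball c e0" "y \<in> cball c e0" for x y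
    by (rule differentiable_bound[OF convex \<Phi>d \<Phi>on that])
  define L where "L = onorm ((*v) ?A) + \<epsilon> * SJ"
  have main: "(x - y) \<bullet> (M *v (?F x - ?F y)) \<le> - \<rho>2 * ((x - y) \<bullet> (M *v (x - y)))
      \<and> norm (?F x - ?F y) \<le> L * norm (x - y)" if x: "x \<in> cball c e0" and y: "y \<in> cball c e0" for x y
  proof
    have split: "?F x - ?F y = ?A *v (x - y) + (\<Phi> x - \<Phi> y)"
      unfolding \<Phi>_def by (simp add: matrix_vector_mult_diff_distrib algebra_simps)
    have "(x - y) \<bullet> (M *v (?F x - ?F y)) = (x - y) \<bullet> (M *v (?A *v (x - y))) + (x - y) \<bullet> (M *v (\<Phi> x - \<Phi> y))"
      unfolding split by (simp add: matrix_vector_right_distrib inner_add_right)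
    also have "\<dots> \<le> - \<rho>1 * ((x - y) \<bullet> (M *v (x - y))) + \<Lambda> * norm (x - y) * (\<epsilon> * SJ * norm (x - y))"
    proof -
      have "(x - y) \<bullet> (M *v (\<Phi> x - \<Phi> y)) \<le> \<Lambda> * norm (x - y) * norm (\<Phi> x - \<Phi> y)"
        using Mb[of "x - y" "\<Phi> x - \<Phi> y"] by simp
      also have "\<dots> \<le> \<Lambda> * norm (x - y) * (\<epsilon> * SJ * norm (x - y))"
        using \<Phi>lip[OF x y] \<Lambda> by (intro mult_left_mono) auto
      finally show ?thesis using lyap by (smt (verit))
    qed
    also have "\<Lambda> * norm (x - y) * (\<epsilon> * SJ * norm (x - y)) = (\<rho>1 - \<rho>2) * m * (norm (x - y))^2"
      unfolding \<epsilon>_def using \<Lambda> SJ by (simp add: field_simps power2_eq_square)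
    also have "(\<rho>1 - \<rho>2) * m * (norm (x - y))^2 \<le> (\<rho>1 - \<rho>2) * ((x - y) \<bullet> (M *v (x - y)))"
      using m(2) r12 by (simp add: mult.assoc mult_left_mono)
    finally show "(x - y) \<bullet> (M *v (?F x - ?F y)) \<le> - \<rho>2 * ((x - y) \<bullet> (M *v (x - y)))"
      by (simp add: algebra_simps)
    have "norm (?F x - ?F y) \<le> norm (?A *v (x - y)) + norm (\<Phi> x - \<Phi> y)"
      unfolding split by (rule norm_triangle_ineq)
    also have "\<dots> \<le> onorm ((*v) ?A) * norm (x - y) + \<epsilon> * SJ * norm (x - y)"
      by (intro add_mono onorm \<Phi>lip x y) simp
    finally show "norm (?F x - ?F y) \<le> L * norm (x - y)" unfolding L_def by (simp add: algebra_simps)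
  qed
  define Lr where "Lr = (\<Sum>J\<in>Js. norm (g J c)) + \<epsilon>"
  have rlip: "\<bar>r J x - r J y\<bar> \<le> Lr * norm (x - y)" if J: "J \<in> Js" and x: "x \<in> cball c e0" and y: "y \<in> cball c e0" for J x y
  proof -
    have rd: "(r J has_derivative (\<lambda>v. g J z \<bullet> v)) (at z within cball c e0)" if "z \<in> cball c e0" for z
    proof -
      have "z \<in> Shat" using e0sub that by blast
      hence "(r J has_derivative (\<lambda>v. g J z \<bullet> v)) (at z within Shat)" using deriv J by blast
      thus ?thesis using has_derivative_subset e0sub by blast
    qed
    have ron: "onorm (\<lambda>v. g J z \<bullet> v) \<le> Lr" if z: "z \<in> cball c e0" for z
    proof (rule onorm_le)
      fix v
      have "norm (g J z \<bullet> v) \<le> norm (g J z) * norm v" using Cauchy_Schwarz_ineq2 by simp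
      also have "norm (g J z) \<le> norm (g J c) + \<epsilon>" using gclose[OF J z] norm_triangle_ineq2[of "g J z" "g J c"] by simp
      also have "norm (g J c) \<le> (\<Sum>J\<in>Js. norm (g J c))" using J fin by (intro member_le_sum) auto
      finally show "norm (g J z \<bullet> v) \<le> Lr * norm v" unfolding Lr_def by (simp add: mult_right_mono)
    qed
    show ?thesis using differentiable_bound[OF convex rd ron x y] by simp
  qed
  show ?thesis using e0 e0sub main rlip by blast
qed

end

lemma at_pos: "x > 0 \<Longrightarrow> at x within {0..} = at (x::real)"
  by (rule at_within_interior) simp

lemma mono_deriv:
  fixes f f' :: "real \<Rightarrow> real"
  assumes d: "\<forall>t\<in>{a..b}. (f has_real_derivative f' t) (at t within {0..})"
    and nn: "\<forall>t. a < t \<and> t < b \<longrightarrow> f' t \<ge> 0" and a: "0 \<le> a" and ab: "a \<le> b"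
  shows "f a \<le> f b"
proof (cases "a = b")
  case True thus ?thesis by simp
next
  case False
  hence ab': "a < b" using ab by simp
  have cont: "continuous_on {a..b} f"
    unfolding continuous_on_eq_continuous_within
  proof
    fix t assume t: "t \<in> {a..b}"
    have "continuous (at t within {0..}) f" using d t by (blast intro: DERIV_continuous)
    thus "continuous (at t within {a..b}) f" by (rule continuous_within_subset) (use a in auto)
  qed
  have dat: "(f has_real_derivative f' t) (at t)" if "a < t" "t < b" for t
  proof -
    have "t \<in> {a..b}" using that by auto
    hence h: "(f has_real_derivative f' t) (at t within {0..})" using d by blast
    have "at t within {0..} = at t" using that a by (intro at_pos) simp
    thus ?thesis using h by simp
  qed
  have diff: "f differentiable at t" if "a < t" "t < b" for t
    using dat[OF that] unfolding has_field_derivative_def by (rule differentiableI)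
  obtain l z where z: "a < z" "z < b" "(f has_real_derivative l) (at z)" "f b - f a = (b - a) * l"
    using MVT[OF ab' cont diff] by blast
  have "l = f' z" using DERIV_unique[OF z(3) dat[OF z(1) z(2)]] .
  hence "l \<ge> 0" using nn z by simp
  thus ?thesis using z(4) ab' by (smt (verit) mult_nonneg_nonneg)
qed

lemma contract:
  fixes W W' :: "real \<Rightarrow> real" and \<rho> L :: real
  assumes \<rho>: "\<rho> \<ge> 0"
    and W0: "\<forall>t\<ge>0. W t \<ge> 0"
    and Wd: "\<forall>t\<ge>0. (W has_real_derivative W' t) (at t within {0..})"
    and up: "\<forall>t\<ge>0. W' t \<le> -2 * \<rho> * W t"
    and low: "\<forall>t\<ge>0. W' t \<ge> - L * W t"
  shows "\<forall>t\<ge>0. \<exists>D. ((\<lambda>s. sqrt (W s)) has_real_derivative D) (at t within {0..}) \<and> D \<le> - \<rho> * sqrt (W t)"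
proof (intro allI impI)
  fix t :: real assume t: "t \<ge> 0"
  show "\<exists>D. ((\<lambda>s. sqrt (W s)) has_real_derivative D) (at t within {0..}) \<and> D \<le> - \<rho> * sqrt (W t)"
  proof (cases "W t > 0")
    case True
    have "((\<lambda>s. sqrt (W s)) has_real_derivative (inverse (sqrt (W t)) / 2 * W' t)) (at t within {0..})"
      by (rule DERIV_chain2[where f = sqrt and g = W, OF DERIV_real_sqrt[OF True]]) (use Wd t in blast)
    moreover have "inverse (sqrt (W t)) / 2 * W' t \<le> - \<rho> * sqrt (W t)"
    proof -
      have "inverse (sqrt (W t)) / 2 * W' t \<le> inverse (sqrt (W t)) / 2 * (-2 * \<rho> * W t)"
        using up t True by (intro mult_left_mono) auto
      also have "\<dots> = - \<rho> * (W t / sqrt (W t))" by (simp add: field_simps)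
      also have "W t / sqrt (W t) = sqrt (W t)" using True by (metis real_div_sqrt less_imp_le)
      finally show ?thesis .
    qed
    ultimately show ?thesis by blast
  next
    case False
    hence Wt: "W t = 0" using W0 t by (simp add: not_less order_antisym)
    have after: "W s = 0" if s: "s \<ge> t" for s
    proof -
      have "(\<lambda>u. - W u) t \<le> (\<lambda>u. - W u) s"
      proof (rule mono_deriv[where f = "\<lambda>u. - W u" and f' = "\<lambda>u. - W' u" and a = t and b = s])
        show "\<forall>u\<in>{t..s}. ((\<lambda>u. - W u) has_real_derivative - W' u) (at u within {0..})"
          using Wd t by (auto intro: derivative_intros)
        show "\<forall>u. t < u \<and> u < s \<longrightarrow> 0 \<le> - W' u"
        proof (intro allI impI)
          fix u assume "t < u \<and> u < s"
          hence u: "u \<ge> 0" using t by simp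
          have "W' u \<le> -2 * \<rho> * W u" using up u by blast
          also have "\<dots> \<le> 0" using \<rho> W0 u by (simp add: mult_nonneg_nonneg)
          finally show "0 \<le> - W' u" by simp
        qed
      qed (use t s in auto)
      thus ?thesis using Wt W0 t s by (smt (verit))
    qed
    have before: "W s = 0" if s: "0 \<le> s" "s < t" for s
    proof -
      have "(\<lambda>u. W u * exp (L * u)) s \<le> (\<lambda>u. W u * exp (L * u)) t"
      proof (rule mono_deriv[where f = "\<lambda>u. W u * exp (L * u)" and f' = "\<lambda>u. W' u * exp (L * u) + W u * (exp (L * u) * L)" and a = s and b = t])
        show "\<forall>u\<in>{s..t}. ((\<lambda>u. W u * exp (L * u)) has_real_derivative W' u * exp (L * u) + W u * (exp (L * u) * L)) (at u within {0..})"
        proof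
          fix u assume u: "u \<in> {s..t}"
          have "(W has_real_derivative W' u) (at u within {0..})" using Wd u s by auto
          thus "((\<lambda>u. W u * exp (L * u)) has_real_derivative W' u * exp (L * u) + W u * (exp (L * u) * L)) (at u within {0..})"
            by (auto intro!: derivative_eq_intros)
        qed
        show "\<forall>u. s < u \<and> u < t \<longrightarrow> 0 \<le> W' u * exp (L * u) + W u * (exp (L * u) * L)"
        proof (intro allI impI)
          fix u assume "s < u \<and> u < t"
          hence u: "u \<ge> 0" using s by simp
          have "0 \<le> (W' u + L * W u) * exp (L * u)" using low u by (intro mult_nonneg_nonneg) auto
          thus "0 \<le> W' u * exp (L * u) + W u * (exp (L * u) * L)" by (simp add: algebra_simps)
        qed
      qed (use s in auto)
      hence "W s * exp (L * s) \<le> 0" using Wt by simp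
      hence "W s \<le> 0" by (simp add: mult_le_0_iff)
      thus ?thesis using W0 s by (smt (verit))
    qed
    have all0: "\<forall>s\<in>{0..}. W s = 0" using after before by (metis atLeast_iff not_le)
    have "((\<lambda>s. 0) has_real_derivative 0) (at t within {0..})" by simp
    hence "((\<lambda>s. sqrt (W s)) has_real_derivative 0) (at t within {0..})"
      by (rule has_field_derivative_transform_within[where d = 1]) (use all0 t in auto)
    thus ?thesis using Wt by auto
  qed
qed

lemma invariance:
  fixes V V' :: "real \<Rightarrow> real"
  assumes Vd: "\<forall>t\<ge>0. (V has_real_derivative V' t) (at t within {0..})"
    and neg: "\<forall>t\<ge>0. V t \<le> b \<longrightarrow> V' t \<le> 0"
    and V0: "V 0 \<le> a" and ab: "a < b"
  shows "\<forall>t\<ge>0. V t \<le> a"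
proof (rule ccontr)
  assume "\<not> (\<forall>t\<ge>0. V t \<le> a)"
  then obtain t1 where t1: "t1 \<ge> 0" "V t1 > a" by auto
  define c' where "c' = (a + min (V t1) b) / 2"
  have c': "a < c'" "c' < V t1" "c' < b" using t1 ab unfolding c'_def by auto
  have cont: "continuous_on {0..t1} V"
    using Vd by (intro DERIV_continuous_on[where D = V']) (auto intro: has_field_derivative_subset)
  define S where "S = {0..t1} \<inter> V -` {c'..}"
  have Sc: "closed S" unfolding S_def by (rule continuous_closed_preimage[OF cont]) auto
  have Sne: "S \<noteq> {}" using t1 c' unfolding S_def by auto
  have Sb: "bdd_below S" unfolding S_def by (rule bdd_belowI[of _ 0]) auto
  define t' where "t' = Inf S"
  have t'S: "t' \<in> S" unfolding t'_def by (rule closed_contains_Inf[OF Sne Sb Sc])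
  hence t'0: "t' \<ge> 0" and Vt': "V t' \<ge> c'" unfolding S_def by auto
  have t'pos: "t' > 0" using t'0 Vt' V0 c' by (cases "t' = 0") auto
  have below: "V s < c'" if "0 \<le> s" "s < t'" for s
  proof (rule ccontr)
    assume "\<not> V s < c'"
    hence "s \<in> S" using that t'S unfolding S_def by auto
    hence "t' \<le> s" unfolding t'_def using Sb by (rule cInf_lower)
    thus False using that by simp
  qed
  have "(\<lambda>u. - V u) 0 \<le> (\<lambda>u. - V u) t'"
  proof (rule mono_deriv[where f = "\<lambda>u. - V u" and f' = "\<lambda>u. - V' u" and a = 0 and b = t'])
    show "\<forall>u\<in>{0..t'}. ((\<lambda>u. - V u) has_real_derivative - V' u) (at u within {0..})"
      using Vd by (auto intro: derivative_intros)
    show "\<forall>u. 0 < u \<and> u < t' \<longrightarrow> 0 \<le> - V' u"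
    proof (intro allI impI)
      fix u assume u: "0 < u \<and> u < t'"
      hence "V u \<le> b" using below[of u] c' by auto
      thus "0 \<le> - V' u" using neg u by auto
    qed
  qed (use t'0 in auto)
  thus False using V0 c' Vt' by simp
qed

lemma sqrt_concave_bound:
  fixes a b :: real
  assumes a: "a > 0" and ab: "a + b \<ge> 0"
  shows "sqrt (a + b) \<le> sqrt a + b / (2 * sqrt a)"
proof -
  have sa: "sqrt a > 0" using a by simp
  define s where "s = sqrt a + b / (2 * sqrt a)"
  have gen: "(x + b / (2 * x))^2 = x^2 + b + b^2 / (4 * x^2)" if "x > 0" for x :: real
    using that by (simp add: power2_eq_square field_simps)
  have "s^2 = (sqrt a)^2 + b + b^2 / (4 * (sqrt a)^2)"
    unfolding s_def by (rule gen[OF sa])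
  hence s2: "s^2 = a + b + b^2 / (4 * a)" using a by simp
  have "b \<ge> - a" using ab by simp
  hence "b / (2 * sqrt a) \<ge> - a / (2 * sqrt a)" using sa divide_right_mono[of "- a" b "2 * sqrt a"] by simp
  moreover have "a / (2 * sqrt a) = sqrt a / 2" using a sa
    by (metis (no_types, lifting) divide_divide_eq_left' real_div_sqrt less_imp_le)
  ultimately have s0: "s \<ge> 0" unfolding s_def using sa by linarith
  have "a + b \<le> s^2" unfolding s2 using a by simp
  hence "sqrt (a + b) \<le> sqrt (s^2)" by (rule real_sqrt_le_mono)
  also have "\<dots> = s" using s0 by simp
  finally show ?thesis unfolding s_def .
qed

lemma normM_step:
  fixes M :: "real^'d::finite^'d"
  assumes M: "sym_pos_def M" and w: "normM M w > 0"
  shows "normM M (w + h) - normM M w \<le> (2 * (w \<bullet> (M *v h)) + h \<bullet> (M *v h)) / (2 * normM M w)"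
proof -
  have sym: "transpose M = M" using M unfolding sym_pos_def_def by blast
  have q: "(w + h) \<bullet> (M *v (w + h)) = w \<bullet> (M *v w) + (2 * (w \<bullet> (M *v h)) + h \<bullet> (M *v h))"
    using M_quad_add[OF sym] by simp
  have qw: "w \<bullet> (M *v w) > 0" using w unfolding normM_def by simp
  have "normM M (w + h) = sqrt (w \<bullet> (M *v w) + (2 * (w \<bullet> (M *v h)) + h \<bullet> (M *v h)))"
    unfolding normM_def q ..
  also have "\<dots> \<le> sqrt (w \<bullet> (M *v w)) + (2 * (w \<bullet> (M *v h)) + h \<bullet> (M *v h)) / (2 * sqrt (w \<bullet> (M *v w)))"
    by (rule sqrt_concave_bound[OF qw]) (use M_nonneg[OF M, of "w + h"] q in simp)
  finally show ?thesis unfolding normM_def by simp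
qed

lemma ivec_add: "ivec (U + J) = ivec U + ivec J"
  by (simp add: ivec_def Finite_Cartesian_Product.vec_eq_iff)

lemma ivec_diff: "ivec (U - J) = ivec U - ivec J"
  by (simp add: ivec_def Finite_Cartesian_Product.vec_eq_iff)

lemma ivec_zero: "ivec 0 = 0"
  by (simp add: ivec_def Finite_Cartesian_Product.vec_eq_iff)

lemma quad_deriv:
  fixes w :: "real \<Rightarrow> real^'d::finite" and M :: "real^'d^'d"
  assumes wd: "(w has_vector_derivative w') (at t within S)" and sym: "transpose M = M"
  shows "((\<lambda>s. w s \<bullet> (M *v w s)) has_real_derivative 2 * (w t \<bullet> (M *v w'))) (at t within S)"
proof -
  have d1: "(w has_derivative (\<lambda>h. h *\<^sub>R w')) (at t within S)" using wd unfolding has_vector_derivative_def .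
  have d2: "((\<lambda>s. M *v w s) has_derivative (\<lambda>h. M *v (h *\<^sub>R w'))) (at t within S)"
    by (rule bounded_linear.has_derivative[OF matrix_vector_mul_bounded_linear d1])
  have d3: "((\<lambda>s. w s \<bullet> (M *v w s)) has_derivative (\<lambda>h. w t \<bullet> (M *v (h *\<^sub>R w')) + (h *\<^sub>R w') \<bullet> (M *v w t))) (at t within S)"
    by (rule has_derivative_inner[OF d1 d2])
  have eq: "(\<lambda>h. w t \<bullet> (M *v (h *\<^sub>R w')) + (h *\<^sub>R w') \<bullet> (M *v w t)) = (*) (2 * (w t \<bullet> (M *v w')))"
  proof
    fix h
    have "(h *\<^sub>R w') \<bullet> (M *v w t) = h * (w t \<bullet> (M *v w'))"
      using M_sym_inner[OF sym, of w' "w t"] by simp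
    thus "w t \<bullet> (M *v (h *\<^sub>R w')) + (h *\<^sub>R w') \<bullet> (M *v w t) = 2 * (w t \<bullet> (M *v w')) * h"
      by (simp add: matrix_vector_mult_scaleR algebra_simps)
  qed
  show ?thesis using d3 unfolding eq has_field_derivative_def .
qed

lemma Mv_sum: "(M :: real^'d::finite^'d) *v (\<Sum>J\<in>A. f J) = (\<Sum>J\<in>A. M *v f J)"
  by (induct A rule: infinite_finite_induct) (simp_all add: matrix_vector_right_distrib)

context setting begin

lemma part3:
  fixes M :: "real^'d^'d" and S :: "nat \<Rightarrow> (int^'d) set"
  assumes M: "sym_pos_def M"
    and key: "\<forall>x\<in>cball c e0. \<forall>y\<in>cball c e0. (x - y) \<bullet> (M *v (drift Js r x - drift Js r y)) \<le> - \<rho>2 * ((x - y) \<bullet> (M *v (x - y)))"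
    and rlip: "\<forall>J\<in>Js. \<forall>x\<in>cball c e0. \<forall>y\<in>cball c e0. \<bar>r J x - r J y\<bar> \<le> Lr * norm (x - y)"
    and e0: "e0 > 0"
    and Fc: "drift Js r c = 0"
    and rnn: "\<forall>J\<in>Js. \<forall>x\<in>Shat. r J x \<ge> 0"
    and r2: "\<rho> < \<rho>2"
    and ballE: "\<forall>x. normM M (x - c) \<le> \<delta>0 \<longrightarrow> x \<in> cball c e0"
    and S_scaled: "\<forall>N\<ge>1. \<forall>X\<in>S N. (1 / real N) *\<^sub>R ivec X \<in> Shat"
  shows "\<exists>K1. \<forall>N\<ge>1. \<forall>X\<in>S N. \<delta>0 \<ge> normM M ((1 / real N) *\<^sub>R ivec X - c)
                 \<and> normM M ((1 / real N) *\<^sub>R ivec X - c) \<ge> K1 / sqrt (real N) \<longrightarrow>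
          genQ Js r N (\<lambda>x. normM M (x - c)) ((1 / real N) *\<^sub>R ivec X)
            \<le> - \<rho> * normM M ((1 / real N) *\<^sub>R ivec X - c)"
proof -
  have sym: "transpose M = M" using M unfolding sym_pos_def_def by blast
  define R where "R = (\<Sum>J\<in>Js. \<bar>r J c\<bar>) + \<bar>Lr\<bar> * e0"
  have R0: "R \<ge> 0" unfolding R_def using e0 by (simp add: sum_nonneg)
  have rle: "r J x \<le> R" if J: "J \<in> Js" and x: "x \<in> cball c e0" for J x
  proof -
    have cc: "c \<in> cball c e0" using e0 by simp
    have "r J x \<le> \<bar>r J c\<bar> + \<bar>r J x - r J c\<bar>" by simp
    also have "\<bar>r J x - r J c\<bar> \<le> Lr * norm (x - c)" using rlip J x cc by blast
    also have "Lr * norm (x - c) \<le> \<bar>Lr\<bar> * e0"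
    proof -
      have "norm (x - c) \<le> e0" using x by (simp add: dist_norm norm_minus_commute)
      hence "\<bar>Lr\<bar> * norm (x - c) \<le> \<bar>Lr\<bar> * e0" by (intro mult_left_mono) auto
      moreover have "Lr * norm (x - c) \<le> \<bar>Lr\<bar> * norm (x - c)" by (intro mult_right_mono) auto
      ultimately show ?thesis by linarith
    qed
    also have "\<bar>r J c\<bar> \<le> (\<Sum>J\<in>Js. \<bar>r J c\<bar>)" using J fin by (intro member_le_sum) auto
    finally show ?thesis unfolding R_def by simp
  qed
  define Qs where "Qs = (\<Sum>J\<in>Js. ivec J \<bullet> (M *v ivec J))"
  have Qs0: "Qs \<ge> 0" unfolding Qs_def using M_nonneg[OF M] by (simp add: sum_nonneg)
  define K1 where "K1 = sqrt (R * Qs / (2 * (\<rho>2 - \<rho>))) + 1"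
  have "sqrt (R * Qs / (2 * (\<rho>2 - \<rho>))) \<ge> 0" using R0 Qs0 r2 by simp
  hence K1: "K1 > 0" unfolding K1_def by linarith
  have K1sq: "K1^2 \<ge> R * Qs / (2 * (\<rho>2 - \<rho>))"
  proof -
    have nn: "R * Qs / (2 * (\<rho>2 - \<rho>)) \<ge> 0" using R0 Qs0 r2 by simp
    have "sqrt (R * Qs / (2 * (\<rho>2 - \<rho>))) \<le> K1" unfolding K1_def by simp
    hence "(sqrt (R * Qs / (2 * (\<rho>2 - \<rho>))))^2 \<le> K1^2" using nn by (intro power_mono) auto
    thus ?thesis using nn by simp
  qed
  have main: "genQ Js r N (\<lambda>x. normM M (x - c)) ((1 / real N) *\<^sub>R ivec X)
            \<le> - \<rho> * normM M ((1 / real N) *\<^sub>R ivec X - c)"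
    if N: "N \<ge> 1" and X: "X \<in> S N" and up: "\<delta>0 \<ge> normM M ((1 / real N) *\<^sub>R ivec X - c)"
      and lo: "normM M ((1 / real N) *\<^sub>R ivec X - c) \<ge> K1 / sqrt (real N)" for N X
  proof -
    define x where "x = (1 / real N) *\<^sub>R ivec X"
    define G where "G = normM M (x - c)"
    have Npos: "real N > 0" using N by simp
    have xS: "x \<in> Shat" unfolding x_def using S_scaled N X by blast
    have xb: "x \<in> cball c e0" using ballE up unfolding x_def by blast
    have cb: "c \<in> cball c e0" using e0 by simp
    have Gpos: "G > 0" unfolding G_def x_def using lo K1 Npos by (smt (verit) divide_pos_pos real_sqrt_gt_zero)
    have G2: "G^2 = (x - c) \<bullet> (M *v (x - c))" unfolding G_def by (rule normM_sq[OF M])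
    define h where "h J = (1 / real N) *\<^sub>R ivec (J::int^'d)" for J
    have step: "normM M (x + h J - c) - G \<le> (2 * ((x - c) \<bullet> (M *v h J)) + h J \<bullet> (M *v h J)) / (2 * G)" for J
      using normM_step[OF M, of "x - c" "h J"] Gpos unfolding G_def by (simp add: algebra_simps)
    have tm: "real N * r J x * (normM M (x + h J - c) - G)
        \<le> r J x * ((x - c) \<bullet> (M *v ivec J)) / G + r J x * (ivec J \<bullet> (M *v ivec J)) / (2 * real N * G)"
      if J: "J \<in> Js" for J
    proof -
      have rn: "real N * r J x \<ge> 0" using rnn J xS Npos by simp
      have "real N * r J x * (normM M (x + h J - c) - G)
          \<le> real N * r J x * ((2 * ((x - c) \<bullet> (M *v h J)) + h J \<bullet> (M *v h J)) / (2 * G))"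
        using step rn by (intro mult_left_mono) auto
      also have "\<dots> = r J x * ((x - c) \<bullet> (M *v ivec J)) / G + r J x * (ivec J \<bullet> (M *v ivec J)) / (2 * real N * G)"
        unfolding h_def using Npos Gpos
        by (simp add: matrix_vector_mult_scaleR field_simps power2_eq_square)
      finally show ?thesis .
    qed
    have "genQ Js r N (\<lambda>x. normM M (x - c)) x = (\<Sum>J\<in>Js. real N * r J x * (normM M (x + h J - c) - G))"
      unfolding genQ_def G_def h_def by simp
    also have "\<dots> \<le> (\<Sum>J\<in>Js. r J x * ((x - c) \<bullet> (M *v ivec J)) / G + r J x * (ivec J \<bullet> (M *v ivec J)) / (2 * real N * G))"
      by (intro sum_mono tm)
    also have "\<dots> = ((x - c) \<bullet> (M *v (\<Sum>J\<in>Js. r J x *\<^sub>R ivec J))) / G + (\<Sum>J\<in>Js. r J x * (ivec J \<bullet> (M *v ivec J))) / (2 * real N * G)"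
      by (simp add: sum.distrib sum_divide_distrib Mv_sum inner_sum_right sum_distrib_left matrix_vector_mult_scaleR)
    also have "\<dots> \<le> (- \<rho>2 * G^2) / G + (R * Qs) / (2 * real N * G)"
    proof (intro add_mono divide_right_mono)
      have "(\<Sum>J\<in>Js. r J x *\<^sub>R ivec J) = drift Js r x - drift Js r c" using Fc by (simp add: drift_def)
      hence "(x - c) \<bullet> (M *v (\<Sum>J\<in>Js. r J x *\<^sub>R ivec J)) \<le> - \<rho>2 * ((x - c) \<bullet> (M *v (x - c)))"
        using key xb cb by simp
      thus "(x - c) \<bullet> (M *v (\<Sum>J\<in>Js. r J x *\<^sub>R ivec J)) \<le> - \<rho>2 * G^2" unfolding G2 .
      have "(\<Sum>J\<in>Js. r J x * (ivec J \<bullet> (M *v ivec J))) \<le> (\<Sum>J\<in>Js. R * (ivec J \<bullet> (M *v ivec J)))"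
        using rle xb M_nonneg[OF M] by (intro sum_mono mult_right_mono) auto
      thus "(\<Sum>J\<in>Js. r J x * (ivec J \<bullet> (M *v ivec J))) \<le> R * Qs" unfolding Qs_def by (simp add: sum_distrib_left)
    qed (use Gpos Npos in auto)
    also have "\<dots> = - \<rho>2 * G + (R * Qs) / (2 * real N * G)" using Gpos by (simp add: power2_eq_square)
    also have "\<dots> \<le> - \<rho> * G"
    proof -
      have "K1^2 / real N \<le> G^2"
      proof -
        have "K1 / sqrt (real N) \<le> G" using lo unfolding G_def x_def .
        hence "(K1 / sqrt (real N))^2 \<le> G^2" using K1 Npos by (intro power_mono) auto
        thus ?thesis using Npos by (simp add: power_divide)
      qed
      hence "R * Qs / (2 * (\<rho>2 - \<rho>)) / real N \<le> G^2" using K1sq Npos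
        by (smt (verit) divide_right_mono)
      hence "R * Qs \<le> (\<rho>2 - \<rho>) * G^2 * (2 * real N)" using r2 Npos
        by (simp add: field_simps)
      hence "(R * Qs) / (2 * real N * G) \<le> (\<rho>2 - \<rho>) * G^2 * (2 * real N) / (2 * real N * G)"
        using Gpos Npos by (intro divide_right_mono) auto
      also have "\<dots> = (\<rho>2 - \<rho>) * G" using Gpos Npos by (simp add: power2_eq_square field_simps)
      finally show ?thesis by (simp add: algebra_simps)
    qed
    finally show ?thesis unfolding x_def G_def .
  qed
  show ?thesis using main by blast
qed

end

lemma Mv_neg: "(M::real^'d::finite^'d) *v (- x) = - (M *v x)"
  by (simp add: Finite_Cartesian_Product.vec_eq_iff matrix_vector_mult_def sum_negf)

lemma coupling_sum:
  fixes A :: "'j set" and T :: "'q set" and p1 p2 p3 :: "'j \<Rightarrow> 'q" and \<alpha> \<beta> \<gamma> :: "'j \<Rightarrow> real"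
  assumes A: "finite A" and T: "finite T" and sub: "\<forall>j\<in>A. p1 j \<in> T \<and> p2 j \<in> T \<and> p3 j \<in> T"
  shows "(\<Sum>q\<in>T. (\<Sum>j\<in>A. (if q = p1 j then \<alpha> j else 0) + (if q = p2 j then \<beta> j else 0) + (if q = p3 j then \<gamma> j else 0)) * \<phi> q)
       = (\<Sum>j\<in>A. \<alpha> j * \<phi> (p1 j) + \<beta> j * \<phi> (p2 j) + \<gamma> j * \<phi> (p3 j))"
proof -
  have "(\<Sum>q\<in>T. (\<Sum>j\<in>A. (if q = p1 j then \<alpha> j else 0) + (if q = p2 j then \<beta> j else 0) + (if q = p3 j then \<gamma> j else 0)) * \<phi> q)
      = (\<Sum>q\<in>T. \<Sum>j\<in>A. (if q = p1 j then \<alpha> j * \<phi> q else 0) + (if q = p2 j then \<beta> j * \<phi> q else 0) + (if q = p3 j then \<gamma> j * \<phi> q else 0))"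
    by (simp add: sum_distrib_right distrib_right if_distrib[of "\<lambda>x. x * \<phi> _"] cong: if_cong)
  also have "\<dots> = (\<Sum>j\<in>A. \<Sum>q\<in>T. (if q = p1 j then \<alpha> j * \<phi> q else 0) + (if q = p2 j then \<beta> j * \<phi> q else 0) + (if q = p3 j then \<gamma> j * \<phi> q else 0))"
    by (rule sum.swap)
  also have "\<dots> = (\<Sum>j\<in>A. \<alpha> j * \<phi> (p1 j) + \<beta> j * \<phi> (p2 j) + \<gamma> j * \<phi> (p3 j))"
  proof (rule sum.cong[OF refl])
    fix j assume j: "j \<in> A"
    have "(\<Sum>q\<in>T. (if q = p1 j then \<alpha> j * \<phi> q else 0) + (if q = p2 j then \<beta> j * \<phi> q else 0) + (if q = p3 j then \<gamma> j * \<phi> q else 0))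
      = (\<Sum>q\<in>T. if q = p1 j then \<alpha> j * \<phi> q else 0) + (\<Sum>q\<in>T. if q = p2 j then \<beta> j * \<phi> q else 0) + (\<Sum>q\<in>T. if q = p3 j then \<gamma> j * \<phi> q else 0)"
      by (simp add: sum.distrib)
    also have "\<dots> = \<alpha> j * \<phi> (p1 j) + \<beta> j * \<phi> (p2 j) + \<gamma> j * \<phi> (p3 j)"
      using sub j T by (simp add: sum.delta')
    finally show "(\<Sum>q\<in>T. (if q = p1 j then \<alpha> j * \<phi> q else 0) + (if q = p2 j then \<beta> j * \<phi> q else 0) + (if q = p3 j then \<gamma> j * \<phi> q else 0))
      = \<alpha> j * \<phi> (p1 j) + \<beta> j * \<phi> (p2 j) + \<gamma> j * \<phi> (p3 j)" .
  qed
  finally show ?thesis .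
qed

context setting begin

lemma part4:
  fixes M :: "real^'d^'d" and S :: "nat \<Rightarrow> (int^'d) set"
  assumes M: "sym_pos_def M"
    and key: "\<forall>x\<in>cball c e0. \<forall>y\<in>cball c e0. (x - y) \<bullet> (M *v (drift Js r x - drift Js r y)) \<le> - \<rho>2 * ((x - y) \<bullet> (M *v (x - y)))"
    and rlip: "\<forall>J\<in>Js. \<forall>x\<in>cball c e0. \<forall>y\<in>cball c e0. \<bar>r J x - r J y\<bar> \<le> Lr * norm (x - y)"
    and rnn: "\<forall>J\<in>Js. \<forall>x\<in>Shat. r J x \<ge> 0"
    and r2: "\<rho> < \<rho>2"
    and ballE: "\<forall>x. normM M (x - c) \<le> \<delta>0 \<longrightarrow> x \<in> cball c e0"
    and S_scaled: "\<forall>N\<ge>1. \<forall>X\<in>S N. (1 / real N) *\<^sub>R ivec X \<in> Shat"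
    and m: "m > 0" "\<forall>x. m * (norm x)^2 \<le> x \<bullet> (M *v x)"
  shows "\<exists>K2. \<forall>N\<ge>1. \<exists>cq. is_markov_coupling Js r N (S N) cq \<and>
          (\<forall>U\<in>S N. \<forall>V\<in>S N.
             normM M (ivec U - real N *\<^sub>R c) \<le> real N * \<delta>0 \<and>
             normM M (ivec V - real N *\<^sub>R c) \<le> real N * \<delta>0 \<and>
             normM M (ivec U - ivec V) \<ge> K2 \<longrightarrow>
             genA cq (\<lambda>(U', V'). normM M (ivec U' - ivec V')) (U, V)
               \<le> - \<rho> * normM M (ivec U - ivec V))"
proof -
  have sym: "transpose M = M" using M unfolding sym_pos_def_def by blast
  define Qs where "Qs = (\<Sum>J\<in>Js. ivec J \<bullet> (M *v ivec J))"
  have Qs0: "Qs \<ge> 0" unfolding Qs_def using M_nonneg[OF M] by (simp add: sum_nonneg)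
  define C2 where "C2 = \<bar>Lr\<bar> * Qs / (2 * sqrt m)"
  have C20: "C2 \<ge> 0" unfolding C2_def using Qs0 m by simp
  define K2 where "K2 = C2 / (\<rho>2 - \<rho>) + 1"
  have "C2 / (\<rho>2 - \<rho>) \<ge> 0" using C20 r2 by simp
  hence K2: "K2 > 0" unfolding K2_def by linarith
  have "\<exists>cq. is_markov_coupling Js r N (S N) cq \<and>
          (\<forall>U\<in>S N. \<forall>V\<in>S N.
             normM M (ivec U - real N *\<^sub>R c) \<le> real N * \<delta>0 \<and>
             normM M (ivec V - real N *\<^sub>R c) \<le> real N * \<delta>0 \<and>
             normM M (ivec U - ivec V) \<ge> K2 \<longrightarrow>
             genA cq (\<lambda>(U', V'). normM M (ivec U' - ivec V')) (U, V)
               \<le> - \<rho> * normM M (ivec U - ivec V))" if N: "N \<ge> 1" for N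
  proof -
    have Npos: "real N > 0" using N by simp
    define a where "a J U = real N * max 0 (r J ((1 / real N) *\<^sub>R ivec U))" for J U
    define mn where "mn J U V = min (a J U) (a J V)" for J U V
    define cq where "cq p q = (\<Sum>J\<in>Js. (if q = (fst p + J, snd p + J) then mn J (fst p) (snd p) else 0)
        + (if q = (fst p + J, snd p) then a J (fst p) - mn J (fst p) (snd p) else 0)
        + (if q = (fst p, snd p + J) then a J (snd p) - mn J (fst p) (snd p) else 0))"
      for p q :: "(int^'d) \<times> (int^'d)"
    define T where "T p = (\<lambda>J. (fst p + J, snd p + J)) ` Js \<union> (\<lambda>J. (fst p + J, snd p)) ` Js \<union> (\<lambda>J. (fst p, snd p + J)) ` Js"
      for p :: "(int^'d) \<times> (int^'d)"
    have Tfin: "finite (T p)" for p unfolding T_def using fin by simp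
    have Tsub: "\<forall>J\<in>Js. (fst p + J, snd p + J) \<in> T p \<and> (fst p + J, snd p) \<in> T p \<and> (fst p, snd p + J) \<in> T p" for p
      unfolding T_def by blast
    have a0: "a J U \<ge> 0" for J U unfolding a_def using Npos by simp
    have cq0: "cq p q \<ge> 0" for p q
      unfolding cq_def using a0 by (intro sum_nonneg) (auto simp: mn_def)
    have supp: "{q. cq p q \<noteq> 0} \<subseteq> T p" for p
    proof
      fix q assume "q \<in> {q. cq p q \<noteq> 0}"
      hence "cq p q \<noteq> 0" by simp
      thus "q \<in> T p"
      proof (rule contrapos_np)
        assume "q \<notin> T p"
        hence "\<forall>J\<in>Js. q \<noteq> (fst p + J, snd p + J) \<and> q \<noteq> (fst p + J, snd p) \<and> q \<noteq> (fst p, snd p + J)"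
          using Tsub by blast
        thus "cq p q = 0" unfolding cq_def by (intro sum.neutral) auto
      qed
    qed
    have sumT: "(\<Sum>q\<in>T p. cq p q * \<phi> q) = (\<Sum>J\<in>Js. mn J (fst p) (snd p) * \<phi> (fst p + J, snd p + J)
        + (a J (fst p) - mn J (fst p) (snd p)) * \<phi> (fst p + J, snd p)
        + (a J (snd p) - mn J (fst p) (snd p)) * \<phi> (fst p, snd p + J))" for p \<phi>
      unfolding cq_def by (rule coupling_sum[OF fin Tfin Tsub])
    have restrict: "(\<Sum>q\<in>{q. cq p q \<noteq> 0 \<and> P q}. cq p q) = (\<Sum>q\<in>T p. cq p q * (if P q then 1 else 0))" for p P
      by (rule sum.mono_neutral_cong_left[OF Tfin]) (use supp[of p] in blast, auto)
    have restrict2: "(\<Sum>q\<in>{q. cq p q \<noteq> 0}. cq p q * \<phi> q) = (\<Sum>q\<in>T p. cq p q * \<phi> q)" for p \<phi>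
      by (rule sum.mono_neutral_cong_left[OF Tfin]) (use supp[of p] in blast, auto)
    have aS: "a J U = real N * r J ((1 / real N) *\<^sub>R ivec U)" if "J \<in> Js" "U \<in> S N" for J U
      using rnn S_scaled N that unfolding a_def by simp
    have margU: "(\<Sum>q\<in>{q. cq (U,V) q \<noteq> 0 \<and> fst q = U'}. cq (U,V) q) = rateX Js r N U U'"
      if U: "U \<in> S N" and V: "V \<in> S N" and U': "U' \<noteq> U" for U V U'
    proof -
      have "(\<Sum>q\<in>{q. cq (U,V) q \<noteq> 0 \<and> fst q = U'}. cq (U,V) q)
          = (\<Sum>J\<in>Js. mn J U V * (if U + J = U' then 1 else 0) + (a J U - mn J U V) * (if U + J = U' then 1 else 0)
              + (a J V - mn J U V) * (if U = U' then 1 else 0))"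
        unfolding restrict sumT by simp
      also have "\<dots> = (\<Sum>J\<in>Js. if U + J = U' then a J U else 0)"
        using U' by (intro sum.cong refl) auto
      also have "\<dots> = (\<Sum>J\<in>{J\<in>Js. U + J = U'}. a J U)" by (simp add: sum.inter_filter fin)
      also have "\<dots> = (\<Sum>J\<in>{J\<in>Js. J \<noteq> 0 \<and> U + J = U'}. real N * r J ((1 / real N) *\<^sub>R ivec U))"
      proof (rule sum.cong)
        show "{J\<in>Js. U + J = U'} = {J\<in>Js. J \<noteq> 0 \<and> U + J = U'}" using U' by auto
      qed (use aS U in auto)
      finally show ?thesis unfolding rateX_def .
    qed
    have margV: "(\<Sum>q\<in>{q. cq (U,V) q \<noteq> 0 \<and> snd q = V'}. cq (U,V) q) = rateX Js r N V V'"
      if U: "U \<in> S N" and V: "V \<in> S N" and V': "V' \<noteq> V" for U V V'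
    proof -
      have "(\<Sum>q\<in>{q. cq (U,V) q \<noteq> 0 \<and> snd q = V'}. cq (U,V) q)
          = (\<Sum>J\<in>Js. mn J U V * (if V + J = V' then 1 else 0) + (a J U - mn J U V) * (if V = V' then 1 else 0)
              + (a J V - mn J U V) * (if V + J = V' then 1 else 0))"
        unfolding restrict sumT by simp
      also have "\<dots> = (\<Sum>J\<in>Js. if V + J = V' then a J V else 0)"
        using V' by (intro sum.cong refl) auto
      also have "\<dots> = (\<Sum>J\<in>{J\<in>Js. V + J = V'}. a J V)" by (simp add: sum.inter_filter fin)
      also have "\<dots> = (\<Sum>J\<in>{J\<in>Js. J \<noteq> 0 \<and> V + J = V'}. real N * r J ((1 / real N) *\<^sub>R ivec V))"
      proof (rule sum.cong)
        show "{J\<in>Js. V + J = V'} = {J\<in>Js. J \<noteq> 0 \<and> V + J = V'}" using V' by auto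
      qed (use aS V in auto)
      finally show ?thesis unfolding rateX_def .
    qed
    have coup: "is_markov_coupling Js r N (S N) cq"
      unfolding is_markov_coupling_def
    proof (intro conjI allI ballI impI)
      fix p q show "cq p q \<ge> 0" by (rule cq0)
    next
      fix p show "finite {q. cq p q \<noteq> 0}" by (rule finite_subset[OF supp Tfin])
    next
      fix U V U' assume "U \<in> S N" "V \<in> S N" "U' \<noteq> U"
      thus "(\<Sum>q\<in>{q. cq (U,V) q \<noteq> 0 \<and> fst q = U'}. cq (U,V) q) = rateX Js r N U U'" by (rule margU)
    next
      fix U V V' assume "U \<in> S N" "V \<in> S N" "V' \<noteq> V"
      thus "(\<Sum>q\<in>{q. cq (U,V) q \<noteq> 0 \<and> snd q = V'}. cq (U,V) q) = rateX Js r N V V'" by (rule margV)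
    qed
    have gen: "genA cq (\<lambda>(U', V'). normM M (ivec U' - ivec V')) (U, V) \<le> - \<rho> * normM M (ivec U - ivec V)"
      if U: "U \<in> S N" and V: "V \<in> S N"
        and bU: "normM M (ivec U - real N *\<^sub>R c) \<le> real N * \<delta>0"
        and bV: "normM M (ivec V - real N *\<^sub>R c) \<le> real N * \<delta>0"
        and K: "normM M (ivec U - ivec V) \<ge> K2" for U V
    proof -
      define H where "H = (\<lambda>(U', V'). normM M (ivec U' - ivec V'))"
      define w where "w = ivec U - ivec V"
      define Hw where "Hw = normM M w"
      define u where "u = (1 / real N) *\<^sub>R ivec U"
      define v where "v = (1 / real N) *\<^sub>R ivec V"
      have Hw: "Hw > 0" using K K2 unfolding Hw_def w_def by simp
      have wuv: "w = real N *\<^sub>R (u - v)" unfolding w_def u_def v_def using Npos by (simp add: algebra_simps)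
      have ub: "u \<in> cball c e0"
      proof -
        have "ivec U - real N *\<^sub>R c = real N *\<^sub>R (u - c)" unfolding u_def using Npos by (simp add: algebra_simps)
        hence "real N * normM M (u - c) \<le> real N * \<delta>0" using bU normM_scale[of M "real N" "u - c"] by simp
        hence "normM M (u - c) \<le> \<delta>0" using Npos by simp
        thus ?thesis using ballE by blast
      qed
      have vb: "v \<in> cball c e0"
      proof -
        have "ivec V - real N *\<^sub>R c = real N *\<^sub>R (v - c)" unfolding v_def using Npos by (simp add: algebra_simps)
        hence "real N * normM M (v - c) \<le> real N * \<delta>0" using bV normM_scale[of M "real N" "v - c"] by simp
        hence "normM M (v - c) \<le> \<delta>0" using Npos by simp
        thus ?thesis using ballE by blast
      qed
      have aU: "a J U = real N * r J u" if "J \<in> Js" for J using aS[OF that U] unfolding u_def .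
      have aV: "a J V = real N * r J v" if "J \<in> Js" for J using aS[OF that V] unfolding v_def .
      have tm: "mn J U V * (H (U + J, V + J) - H (U, V)) + (a J U - mn J U V) * (H (U + J, V) - H (U, V))
            + (a J V - mn J U V) * (H (U, V + J) - H (U, V))
          \<le> (a J U - a J V) * (w \<bullet> (M *v ivec J)) / Hw + \<bar>a J U - a J V\<bar> * (ivec J \<bullet> (M *v ivec J)) / (2 * Hw)"
        for J
      proof -
        have h1: "H (U + J, V + J) = H (U, V)" unfolding H_def by (simp add: ivec_add)
        have h2: "H (U + J, V) - H (U, V) \<le> (2 * (w \<bullet> (M *v ivec J)) + ivec J \<bullet> (M *v ivec J)) / (2 * Hw)"
          using normM_step[OF M, of w "ivec J"] Hw unfolding H_def Hw_def w_def by (simp add: ivec_add algebra_simps)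
        have h3: "H (U, V + J) - H (U, V) \<le> (2 * (w \<bullet> (M *v (- ivec J))) + (- ivec J) \<bullet> (M *v (- ivec J))) / (2 * Hw)"
          using normM_step[OF M, of w "- ivec J"] Hw unfolding H_def Hw_def w_def by (simp add: ivec_add algebra_simps)
        have c1: "a J U - mn J U V \<ge> 0" and c2: "a J V - mn J U V \<ge> 0" unfolding mn_def by auto
        have "mn J U V * (H (U + J, V + J) - H (U, V)) + (a J U - mn J U V) * (H (U + J, V) - H (U, V))
            + (a J V - mn J U V) * (H (U, V + J) - H (U, V))
          \<le> 0 + (a J U - mn J U V) * ((2 * (w \<bullet> (M *v ivec J)) + ivec J \<bullet> (M *v ivec J)) / (2 * Hw))
            + (a J V - mn J U V) * ((2 * (w \<bullet> (M *v (- ivec J))) + (- ivec J) \<bullet> (M *v (- ivec J))) / (2 * Hw))"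
          using h1 h2 h3 c1 c2 by (intro add_mono mult_left_mono) auto
        also have "\<dots> = ((a J U - mn J U V) - (a J V - mn J U V)) * (w \<bullet> (M *v ivec J)) / Hw
            + ((a J U - mn J U V) + (a J V - mn J U V)) * (ivec J \<bullet> (M *v ivec J)) / (2 * Hw)"
          using Hw by (simp add: Mv_neg field_simps)
        also have "((a J U - mn J U V) + (a J V - mn J U V)) = \<bar>a J U - a J V\<bar>" unfolding mn_def by auto
        finally show ?thesis by simp
      qed
      have "genA cq H (U, V) = (\<Sum>q\<in>T (U,V). cq (U,V) q * (H q - H (U, V)))"
        unfolding genA_def by (rule restrict2)
      also have "\<dots> = (\<Sum>J\<in>Js. mn J U V * (H (U + J, V + J) - H (U, V)) + (a J U - mn J U V) * (H (U + J, V) - H (U, V))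
            + (a J V - mn J U V) * (H (U, V + J) - H (U, V)))"
        unfolding sumT by simp
      also have "\<dots> \<le> (\<Sum>J\<in>Js. (a J U - a J V) * (w \<bullet> (M *v ivec J)) / Hw + \<bar>a J U - a J V\<bar> * (ivec J \<bullet> (M *v ivec J)) / (2 * Hw))"
        by (intro sum_mono tm)
      also have "\<dots> = (\<Sum>J\<in>Js. (a J U - a J V) * (w \<bullet> (M *v ivec J))) / Hw + (\<Sum>J\<in>Js. \<bar>a J U - a J V\<bar> * (ivec J \<bullet> (M *v ivec J))) / (2 * Hw)"
        by (simp add: sum.distrib sum_divide_distrib)
      also have "\<dots> \<le> (- \<rho>2 * Hw^2) / Hw + (\<bar>Lr\<bar> * Qs * (Hw / sqrt m)) / (2 * Hw)"
      proof (intro add_mono divide_right_mono)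
        have "(\<Sum>J\<in>Js. (a J U - a J V) * (w \<bullet> (M *v ivec J))) = (\<Sum>J\<in>Js. real N * ((r J u - r J v) * (w \<bullet> (M *v ivec J))))"
          using aU aV by (intro sum.cong refl) (simp add: algebra_simps)
        also have "\<dots> = real N * (w \<bullet> (M *v (drift Js r u - drift Js r v)))"
          by (simp add: drift_def Mv_sum inner_sum_right sum_distrib_left matrix_vector_mult_scaleR scaleR_diff_left sum_subtractf algebra_simps)
        also have "\<dots> = (real N)^2 * ((u - v) \<bullet> (M *v (drift Js r u - drift Js r v)))"
          unfolding wuv by (simp add: power2_eq_square)
        also have "\<dots> \<le> (real N)^2 * (- \<rho>2 * ((u - v) \<bullet> (M *v (u - v))))"
          using key ub vb by (intro mult_left_mono) auto
        also have "\<dots> = - \<rho>2 * Hw^2"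
        proof -
          have "Hw^2 = w \<bullet> (M *v w)" unfolding Hw_def by (rule normM_sq[OF M])
          also have "\<dots> = (real N)^2 * ((u - v) \<bullet> (M *v (u - v)))" unfolding wuv by (rule M_quad_scale)
          finally show ?thesis by simp
        qed
        finally show "(\<Sum>J\<in>Js. (a J U - a J V) * (w \<bullet> (M *v ivec J))) \<le> - \<rho>2 * Hw^2" .
        have nw: "norm w \<le> Hw / sqrt m"
        proof -
          have "m * (norm w)^2 \<le> Hw^2" using m(2) normM_sq[OF M, of w] unfolding Hw_def by simp
          hence "(norm w)^2 \<le> Hw^2 / m" using m(1) by (simp add: field_simps)
          hence "sqrt ((norm w)^2) \<le> sqrt (Hw^2 / m)" by (rule real_sqrt_le_mono)
          thus ?thesis using Hw m(1) by (simp add: real_sqrt_divide)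
        qed
        have "(\<Sum>J\<in>Js. \<bar>a J U - a J V\<bar> * (ivec J \<bullet> (M *v ivec J))) \<le> (\<Sum>J\<in>Js. (\<bar>Lr\<bar> * norm w) * (ivec J \<bullet> (M *v ivec J)))"
        proof (intro sum_mono mult_right_mono)
          fix J assume J: "J \<in> Js"
          have "\<bar>a J U - a J V\<bar> = real N * \<bar>r J u - r J v\<bar>" using aU[OF J] aV[OF J] Npos
            by (simp add: abs_mult right_diff_distrib[symmetric])
          also have "\<dots> \<le> real N * (\<bar>Lr\<bar> * norm (u - v))"
          proof -
            have "\<bar>r J u - r J v\<bar> \<le> Lr * norm (u - v)" using rlip J ub vb by blast
            also have "\<dots> \<le> \<bar>Lr\<bar> * norm (u - v)" by (intro mult_right_mono) auto
            finally show ?thesis using Npos by (intro mult_left_mono) auto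
          qed
          also have "\<dots> = \<bar>Lr\<bar> * norm w" unfolding wuv using Npos by simp
          finally show "\<bar>a J U - a J V\<bar> \<le> \<bar>Lr\<bar> * norm w" .
          show "0 \<le> ivec J \<bullet> (M *v ivec J)" by (rule M_nonneg[OF M])
        qed
        also have "\<dots> = \<bar>Lr\<bar> * norm w * Qs" unfolding Qs_def by (simp add: sum_distrib_left)
        also have "\<dots> \<le> \<bar>Lr\<bar> * (Hw / sqrt m) * Qs" using nw Qs0 by (intro mult_right_mono mult_left_mono) auto
        finally show "(\<Sum>J\<in>Js. \<bar>a J U - a J V\<bar> * (ivec J \<bullet> (M *v ivec J))) \<le> \<bar>Lr\<bar> * Qs * (Hw / sqrt m)"
          by (simp add: mult_ac)
      qed (use Hw in auto)
      also have "\<dots> = - \<rho>2 * Hw + C2" unfolding C2_def using Hw m(1) by (simp add: power2_eq_square field_simps)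
      also have "\<dots> \<le> - \<rho> * Hw"
      proof -
        have "Hw \<ge> C2 / (\<rho>2 - \<rho>)" using K unfolding K2_def Hw_def w_def by simp
        hence "C2 \<le> (\<rho>2 - \<rho>) * Hw" using r2 by (simp add: field_simps)
        thus ?thesis by (simp add: algebra_simps)
      qed
      finally show ?thesis unfolding H_def Hw_def w_def .
    qed
    show ?thesis using coup gen by blast
  qed
  thus ?thesis by blast
qed

end

theorem theorem2p3:
  fixes Js :: "(int^'d::finite) set"
    and r :: "int^'d \<Rightarrow> real^'d \<Rightarrow> real"
    and g :: "int^'d \<Rightarrow> real^'d \<Rightarrow> real^'d"
    and S :: "nat \<Rightarrow> (int^'d) set"
    and Shat :: "(real^'d) set"
    and c :: "real^'d"
    and \<rho> :: real
  assumes Shat_closed: "closed Shat"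
    and S_scaled: "\<forall>N\<ge>1. \<forall>X\<in>S N. (1 / real N) *\<^sub>R ivec X \<in> Shat"
    and S_jumps: "\<forall>N\<ge>1. \<forall>X\<in>S N. \<forall>J\<in>Js. r J ((1 / real N) *\<^sub>R ivec X) > 0 \<longrightarrow> X + J \<in> S N"
    and A1_finite: "finite Js"
    and A1_nonneg: "\<forall>J\<in>Js. \<forall>x\<in>Shat. r J x \<ge> 0"
    and A1_deriv: "\<forall>J\<in>Js. \<forall>x\<in>Shat. (r J has_derivative (\<lambda>v. g J x \<bullet> v)) (at x within Shat)"
    and A1_cont: "\<forall>J\<in>Js. continuous_on Shat (g J)"
    and A2: "\<forall>v::int^'d. \<exists>xs. set xs \<subseteq> Js \<and> v = sum_list xs"
    and A3_c: "c \<in> interior Shat"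
    and A3_eq: "drift Js r c = 0"
    and A3_pos: "\<forall>J\<in>Js. r J c > 0"
    and A3_rho: "\<rho> > 0"
    and A3_eig: "\<forall>lam. complex_eigenvalue (matA Js g c) lam \<longrightarrow> Re lam < - \<rho>"
  shows "\<exists>M \<delta>0. sym_pos_def M \<and> \<delta>0 > 0 \<and>
    (\<forall>y. (\<forall>t\<ge>0. y t \<in> Shat \<and> (y has_vector_derivative drift Js r (y t)) (at t within {0..}))
        \<and> normM M (y 0 - c) \<le> \<delta>0 \<longrightarrow>
        (\<forall>t\<ge>0. \<exists>D. ((\<lambda>s. normM M (y s - c)) has_real_derivative D) (at t within {0..})
                  \<and> D \<le> - \<rho> * normM M (y t - c))) \<and>
    (\<forall>y z. (\<forall>t\<ge>0. y t \<in> Shat \<and> (y has_vector_derivative drift Js r (y t)) (at t within {0..}))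
        \<and> (\<forall>t\<ge>0. z t \<in> Shat \<and> (z has_vector_derivative drift Js r (z t)) (at t within {0..}))
        \<and> normM M (y 0 - c) \<le> \<delta>0 \<and> normM M (z 0 - c) \<le> \<delta>0 \<longrightarrow>
        (\<forall>t\<ge>0. \<exists>D. ((\<lambda>s. normM M (y s - z s)) has_real_derivative D) (at t within {0..})
                  \<and> D \<le> - \<rho> * normM M (y t - z t))) \<and>
    (\<exists>K1 K2. \<exists>N0::nat. \<forall>N\<ge>N0.
       (\<forall>X\<in>S N. \<delta>0 \<ge> normM M ((1 / real N) *\<^sub>R ivec X - c)
                 \<and> normM M ((1 / real N) *\<^sub>R ivec X - c) \<ge> K1 / sqrt (real N) \<longrightarrow>
          genQ Js r N (\<lambda>x. normM M (x - c)) ((1 / real N) *\<^sub>R ivec X)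
            \<le> - \<rho> * normM M ((1 / real N) *\<^sub>R ivec X - c)) \<and>
       (\<exists>cq. is_markov_coupling Js r N (S N) cq \<and>
          (\<forall>U\<in>S N. \<forall>V\<in>S N.
             normM M (ivec U - real N *\<^sub>R c) \<le> real N * \<delta>0 \<and>
             normM M (ivec V - real N *\<^sub>R c) \<le> real N * \<delta>0 \<and>
             normM M (ivec U - ivec V) \<ge> K2 \<longrightarrow>
             genA cq (\<lambda>(U', V'). normM M (ivec U' - ivec V')) (U, V)
               \<le> - \<rho> * normM M (ivec U - ivec V))))"
proof -
  interpret setting Js r g Shat c using A1_finite A1_deriv A1_cont A3_c by unfold_locales
  obtain M \<rho>1 where M: "sym_pos_def M" and r1: "\<rho>1 > \<rho>"
    and lyap: "\<forall>x. x \<bullet> (M *v (matA Js g c *v x)) \<le> - \<rho>1 * (x \<bullet> (M *v x))"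
    using lyapunov[OF A3_eig] by blast
  define \<rho>2 where "\<rho>2 = (\<rho> + \<rho>1) / 2"
  have r2: "\<rho> < \<rho>2" "\<rho>2 < \<rho>1" unfolding \<rho>2_def using r1 by auto
  obtain e0 where e0: "e0 > 0" "cball c e0 \<subseteq> Shat"
    and keyL: "\<exists>L. \<forall>x\<in>cball c e0. \<forall>y\<in>cball c e0.
        (x - y) \<bullet> (M *v (drift Js r x - drift Js r y)) \<le> - \<rho>2 * ((x - y) \<bullet> (M *v (x - y)))
      \<and> norm (drift Js r x - drift Js r y) \<le> L * norm (x - y)"
    and rlipE: "\<exists>Lr. \<forall>J\<in>Js. \<forall>x\<in>cball c e0. \<forall>y\<in>cball c e0. \<bar>r J x - r J y\<bar> \<le> Lr * norm (x - y)"
    using key_est[OF M lyap r2(2)] by blast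
  obtain L where keyL': "\<forall>x\<in>cball c e0. \<forall>y\<in>cball c e0.
        (x - y) \<bullet> (M *v (drift Js r x - drift Js r y)) \<le> - \<rho>2 * ((x - y) \<bullet> (M *v (x - y)))
      \<and> norm (drift Js r x - drift Js r y) \<le> L * norm (x - y)" using keyL by blast
  obtain Lr where rlip: "\<forall>J\<in>Js. \<forall>x\<in>cball c e0. \<forall>y\<in>cball c e0. \<bar>r J x - r J y\<bar> \<le> Lr * norm (x - y)"
    using rlipE by blast
  have key: "\<forall>x\<in>cball c e0. \<forall>y\<in>cball c e0.
        (x - y) \<bullet> (M *v (drift Js r x - drift Js r y)) \<le> - \<rho>2 * ((x - y) \<bullet> (M *v (x - y)))"
    using keyL' by blast
  have Flip: "norm (drift Js r x - drift Js r y) \<le> L * norm (x - y)" if "x \<in> cball c e0" "y \<in> cball c e0" for x y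
    using keyL' that by blast
  obtain m where m: "m > 0" "\<forall>x. m * (norm x)^2 \<le> x \<bullet> (M *v x)" using M_lower[OF M] by blast
  have sym: "transpose M = M" using M unfolding sym_pos_def_def by blast
  define \<delta>1 where "\<delta>1 = e0 * sqrt m"
  define \<delta>0 where "\<delta>0 = \<delta>1 / 2"
  have \<delta>1: "\<delta>1 > 0" unfolding \<delta>1_def using e0 m by simp
  have \<delta>0: "\<delta>0 > 0" "\<delta>0 < \<delta>1" unfolding \<delta>0_def using \<delta>1 by auto
  have ballq: "x \<in> cball c e0" if q: "(x - c) \<bullet> (M *v (x - c)) \<le> \<delta>1^2" for x
  proof -
    have "m * (norm (x - c))^2 \<le> \<delta>1^2" using m(2) q by (meson order_trans)
    also have "\<delta>1^2 = m * e0^2" unfolding \<delta>1_def using m by (simp add: power_mult_distrib)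
    finally have "(norm (x - c))^2 \<le> e0^2" using m by simp
    hence "norm (x - c) \<le> e0" using power2_le_imp_le[of "norm (x - c)" e0] e0(1) by simp
    thus ?thesis by (simp add: dist_norm norm_minus_commute)
  qed
  have ballE: "\<forall>x. normM M (x - c) \<le> \<delta>0 \<longrightarrow> x \<in> cball c e0"
  proof (intro allI impI)
    fix x assume h: "normM M (x - c) \<le> \<delta>0"
    have "(normM M (x - c))^2 \<le> \<delta>0^2" using h by (intro power_mono) (auto simp: normM_def intro: M_nonneg[OF M])
    also have "\<dots> \<le> \<delta>1^2" using \<delta>0 by (intro power_mono) auto
    finally show "x \<in> cball c e0" using ballq normM_sq[OF M] by simp
  qed
  have cS: "c \<in> Shat" using A3_c interior_subset by blast
  have stay: "\<forall>t\<ge>0. y t \<in> cball c e0"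
    if sol: "\<forall>t\<ge>0. y t \<in> Shat \<and> (y has_vector_derivative drift Js r (y t)) (at t within {0..})"
      and y0: "normM M (y 0 - c) \<le> \<delta>0" for y
  proof -
    define V where "V s = (y s - c) \<bullet> (M *v (y s - c))" for s
    define V' where "V' s = 2 * ((y s - c) \<bullet> (M *v drift Js r (y s)))" for s
    have Vd: "\<forall>t\<ge>0. (V has_real_derivative V' t) (at t within {0..})"
    proof (intro allI impI)
      fix t :: real assume t: "t \<ge> 0"
      have "((\<lambda>s. y s - c) has_vector_derivative drift Js r (y t) - 0) (at t within {0..})"
        using sol t by (intro has_vector_derivative_diff has_vector_derivative_const) auto
      hence "((\<lambda>s. y s - c) has_vector_derivative drift Js r (y t)) (at t within {0..})" by simp
      from quad_deriv[OF this sym] show "(V has_real_derivative V' t) (at t within {0..})"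
        unfolding V_def V'_def .
    qed
    have neg: "\<forall>t\<ge>0. V t \<le> \<delta>1^2 \<longrightarrow> V' t \<le> 0"
    proof (intro allI impI)
      fix t :: real assume t: "t \<ge> 0" and Vt: "V t \<le> \<delta>1^2"
      have yb: "y t \<in> cball c e0" using ballq Vt unfolding V_def by blast
      have cb: "c \<in> cball c e0" using e0 by simp
      have "(y t - c) \<bullet> (M *v (drift Js r (y t) - drift Js r c)) \<le> - \<rho>2 * ((y t - c) \<bullet> (M *v (y t - c)))"
        using key yb cb by blast
      also have "\<dots> \<le> 0" using r2 A3_rho M_nonneg[OF M, of "y t - c"] by (simp add: mult_nonneg_nonneg)
      finally show "V' t \<le> 0" unfolding V'_def using A3_eq by simp
    qed
    have V0: "V 0 \<le> \<delta>0^2"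
    proof -
      have "V 0 = (normM M (y 0 - c))^2" unfolding V_def using normM_sq[OF M] by simp
      also have "\<dots> \<le> \<delta>0^2" using y0 by (intro power_mono) (auto simp: normM_def intro: M_nonneg[OF M])
      finally show ?thesis .
    qed
    have "\<delta>0^2 < \<delta>1^2" using \<delta>0 by (intro power_strict_mono) auto
    from invariance[OF Vd neg V0 this] have "\<forall>t\<ge>0. V t \<le> \<delta>0^2" .
    moreover have "\<delta>0^2 \<le> \<delta>1^2" using \<delta>0 by (intro power_mono) auto
    ultimately show ?thesis using ballq unfolding V_def by (meson order_trans)
  qed
  have pair: "\<forall>t\<ge>0. \<exists>D. ((\<lambda>s. normM M (y s - z s)) has_real_derivative D) (at t within {0..})
                  \<and> D \<le> - \<rho> * normM M (y t - z t)"
    if soly: "\<forall>t\<ge>0. y t \<in> Shat \<and> (y has_vector_derivative drift Js r (y t)) (at t within {0..})"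
      and solz: "\<forall>t\<ge>0. z t \<in> Shat \<and> (z has_vector_derivative drift Js r (z t)) (at t within {0..})"
      and y0: "normM M (y 0 - c) \<le> \<delta>0" and z0: "normM M (z 0 - c) \<le> \<delta>0" for y z
  proof -
    have yb: "\<forall>t\<ge>0. y t \<in> cball c e0" by (rule stay[OF soly y0])
    have zb: "\<forall>t\<ge>0. z t \<in> cball c e0" by (rule stay[OF solz z0])
    define W where "W s = (y s - z s) \<bullet> (M *v (y s - z s))" for s
    define W' where "W' s = 2 * ((y s - z s) \<bullet> (M *v (drift Js r (y s) - drift Js r (z s))))" for s
    have W0: "\<forall>t\<ge>0. W t \<ge> 0" unfolding W_def using M_nonneg[OF M] by blast
    have Wd: "\<forall>t\<ge>0. (W has_real_derivative W' t) (at t within {0..})"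
    proof (intro allI impI)
      fix t :: real assume t: "t \<ge> 0"
      have "((\<lambda>s. y s - z s) has_vector_derivative drift Js r (y t) - drift Js r (z t)) (at t within {0..})"
        using soly solz t by (intro has_vector_derivative_diff) auto
      from quad_deriv[OF this sym] show "(W has_real_derivative W' t) (at t within {0..})"
        unfolding W_def W'_def .
    qed
    have up: "\<forall>t\<ge>0. W' t \<le> -2 * \<rho> * W t"
    proof (intro allI impI)
      fix t :: real assume t: "t \<ge> 0"
      have "(y t - z t) \<bullet> (M *v (drift Js r (y t) - drift Js r (z t))) \<le> - \<rho>2 * W t"
        using key yb zb t unfolding W_def by blast
      also have "\<dots> \<le> - \<rho> * W t" using r2 W0 t by (intro mult_right_mono) auto
      finally show "W' t \<le> -2 * \<rho> * W t" unfolding W'_def by simp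
    qed
    define \<Lambda>0 where "\<Lambda>0 = onorm ((*v) M)"
    have \<Lambda>0: "\<Lambda>0 \<ge> 0" unfolding \<Lambda>0_def by (rule onorm_pos_le) simp
    define Lc where "Lc = 2 * \<Lambda>0 * \<bar>L\<bar> / m"
    have low: "\<forall>t\<ge>0. W' t \<ge> - Lc * W t"
    proof (intro allI impI)
      fix t :: real assume t: "t \<ge> 0"
      define d where "d = y t - z t"
      have "\<bar>d \<bullet> (M *v (drift Js r (y t) - drift Js r (z t)))\<bar> \<le> \<Lambda>0 * norm d * norm (drift Js r (y t) - drift Js r (z t))"
        unfolding \<Lambda>0_def by (rule M_bound)
      also have "\<dots> \<le> \<Lambda>0 * norm d * (\<bar>L\<bar> * norm d)"
      proof -
        have "norm (drift Js r (y t) - drift Js r (z t)) \<le> L * norm d" unfolding d_def using Flip yb zb t by blast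
        also have "\<dots> \<le> \<bar>L\<bar> * norm d" by (intro mult_right_mono) auto
        finally show ?thesis using \<Lambda>0 by (intro mult_left_mono) auto
      qed
      also have "\<dots> = \<Lambda>0 * \<bar>L\<bar> * (norm d)^2" by (simp add: power2_eq_square mult_ac)
      also have "\<dots> \<le> \<Lambda>0 * \<bar>L\<bar> * (W t / m)"
      proof -
        have "m * (norm d)^2 \<le> W t" using m(2) unfolding W_def d_def by blast
        hence "(norm d)^2 \<le> W t / m" using m(1) by (simp add: field_simps)
        thus ?thesis using \<Lambda>0 by (intro mult_left_mono) auto
      qed
      finally have "\<bar>d \<bullet> (M *v (drift Js r (y t) - drift Js r (z t)))\<bar> \<le> \<Lambda>0 * \<bar>L\<bar> * (W t / m)" .
      thus "W' t \<ge> - Lc * W t" unfolding W'_def Lc_def d_def by (simp add: field_simps abs_le_iff)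
    qed
    have "\<forall>t\<ge>0. \<exists>D. ((\<lambda>s. sqrt (W s)) has_real_derivative D) (at t within {0..}) \<and> D \<le> - \<rho> * sqrt (W t)"
      by (rule contract[OF _ W0 Wd up low]) (use A3_rho in simp)
    thus ?thesis unfolding W_def normM_def .
  qed
  have solc: "\<forall>t\<ge>0. (\<lambda>s. c) t \<in> Shat \<and> ((\<lambda>s. c) has_vector_derivative drift Js r ((\<lambda>s. c) t)) (at t within {0..})"
    using cS A3_eq by (simp add: has_vector_derivative_const)
  have c0: "normM M ((\<lambda>s. c) 0 - c) \<le> \<delta>0" using \<delta>0 by (simp add: normM_def)
  have P1: "\<forall>y. (\<forall>t\<ge>0. y t \<in> Shat \<and> (y has_vector_derivative drift Js r (y t)) (at t within {0..}))
        \<and> normM M (y 0 - c) \<le> \<delta>0 \<longrightarrow>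
        (\<forall>t\<ge>0. \<exists>D. ((\<lambda>s. normM M (y s - c)) has_real_derivative D) (at t within {0..})
                  \<and> D \<le> - \<rho> * normM M (y t - c))"
    using pair[of _ "\<lambda>s. c", OF _ solc _ c0] by blast
  have P2: "\<forall>y z. (\<forall>t\<ge>0. y t \<in> Shat \<and> (y has_vector_derivative drift Js r (y t)) (at t within {0..}))
        \<and> (\<forall>t\<ge>0. z t \<in> Shat \<and> (z has_vector_derivative drift Js r (z t)) (at t within {0..}))
        \<and> normM M (y 0 - c) \<le> \<delta>0 \<and> normM M (z 0 - c) \<le> \<delta>0 \<longrightarrow>
        (\<forall>t\<ge>0. \<exists>D. ((\<lambda>s. normM M (y s - z s)) has_real_derivative D) (at t within {0..})
                  \<and> D \<le> - \<rho> * normM M (y t - z t))"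
    using pair by blast
  obtain K1 where K1: "\<forall>N\<ge>1. \<forall>X\<in>S N. \<delta>0 \<ge> normM M ((1 / real N) *\<^sub>R ivec X - c)
                 \<and> normM M ((1 / real N) *\<^sub>R ivec X - c) \<ge> K1 / sqrt (real N) \<longrightarrow>
          genQ Js r N (\<lambda>x. normM M (x - c)) ((1 / real N) *\<^sub>R ivec X)
            \<le> - \<rho> * normM M ((1 / real N) *\<^sub>R ivec X - c)"
    using part3[OF M key rlip e0(1) A3_eq A1_nonneg r2(1) ballE S_scaled] by blast
  obtain K2 where K2: "\<forall>N\<ge>1. \<exists>cq. is_markov_coupling Js r N (S N) cq \<and>
          (\<forall>U\<in>S N. \<forall>V\<in>S N.
             normM M (ivec U - real N *\<^sub>R c) \<le> real N * \<delta>0 \<and>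
             normM M (ivec V - real N *\<^sub>R c) \<le> real N * \<delta>0 \<and>
             normM M (ivec U - ivec V) \<ge> K2 \<longrightarrow>
             genA cq (\<lambda>(U', V'). normM M (ivec U' - ivec V')) (U, V)
               \<le> - \<rho> * normM M (ivec U - ivec V))"
    using part4[OF M key rlip A1_nonneg r2(1) ballE S_scaled m] by blast
  have P3: "\<exists>K1 K2. \<exists>N0::nat. \<forall>N\<ge>N0.
       (\<forall>X\<in>S N. \<delta>0 \<ge> normM M ((1 / real N) *\<^sub>R ivec X - c)
                 \<and> normM M ((1 / real N) *\<^sub>R ivec X - c) \<ge> K1 / sqrt (real N) \<longrightarrow>
          genQ Js r N (\<lambda>x. normM M (x - c)) ((1 / real N) *\<^sub>R ivec X)
            \<le> - \<rho> * normM M ((1 / real N) *\<^sub>R ivec X - c)) \<and>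
       (\<exists>cq. is_markov_coupling Js r N (S N) cq \<and>
          (\<forall>U\<in>S N. \<forall>V\<in>S N.
             normM M (ivec U - real N *\<^sub>R c) \<le> real N * \<delta>0 \<and>
             normM M (ivec V - real N *\<^sub>R c) \<le> real N * \<delta>0 \<and>
             normM M (ivec U - ivec V) \<ge> K2 \<longrightarrow>
             genA cq (\<lambda>(U', V'). normM M (ivec U' - ivec V')) (U, V)
               \<le> - \<rho> * normM M (ivec U - ivec V)))"
    apply (rule exI[of _ K1], rule exI[of _ K2], rule exI[of _ "1::nat"])
    using K1 K2 by blast
  show ?thesis
    apply (rule exI[of _ M], rule exI[of _ \<delta>0])
    using M \<delta>0(1) P1 P2 P3 by blast
qed

end
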